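(* Let $n\ge 2$ and let $u_0,\dots,u_{n-2}$ be unitaries on $(\mathbb{C}^2)^{\otimes n}$, with $u_t$ acting on qubits $t,t+1$, and let $u_{n-1}=c\,\mathbb{1}$ with $|c|=1$. For integers $t_2\ge t_1$ set $U_{t_2:t_1}=u_{t_2-1}\cdots u_{t_1}$ (and $U_{t:t}=\mathbb{1}$). Let $|\phi\rangle$ be an eigenvector of $U_{n:0}$ with $U_{n:0}|\phi\rangle=e^{i\phi}|\phi\rangle$. Consider the Hilbert space $(\mathbb{C}^2)^{\otimes n}\otimes\mathcal{H}_{\mathrm{clock}}$, where $\mathcal{H}_{\mathrm{clock}}=\mathrm{span}\{|t\rangle: t=0,\dots,n-1\}$ is the single-excitation subspace of a chain of $n$ two-level clock sites ($|t\rangle$ = clock site $t$ occupied, all others empty), and the one-hand periodic clock Hamiltonian $$H=\mathbb{1}-\tfrac12\sum_{t=0}^{n-1}\big(u_t\otimes|t+1\rangle\langle t|+\mathrm{h.c.}\big),\qquad |n\rangle\equiv|0\rangle.$$ For $k\in\frac{2\pi}{n}\{0,1,\dots,n-1\}$ let $$|\Psi_{k,\phi}\rangle=\frac{1}{\sqrt n}\sum_{t=0}^{n-1}e^{i(k-\phi/n)t}\,U_{t:0}|\phi\rangle\otimes|t\rangle$$ (these are eigenvectors of $H$ with eigenvalues $1-\cos(k-\phi/n)$). Let $A=A_s\cup A_c$, where $A_s$ (resp. $A_c$) is the set of spin (resp. clock) sites in a cyclic interval $\{t_1,t_1+1,\dots,t_1+\ell-1\}\bmod n$ with $\ell\le n/2$.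 Suppose $C_\ell\ge 0$ is such that for every $t\in\{0,\dots,n-1\}$ and every operator $O$ supported on $A_s$ with $\|O\|_{\mathrm{op}}\le 1$, $$\Big|\langle\phi|U_{t:0}^\dagger\,O\,U_{t:0}|\phi\rangle-2^{-n}\mathrm{Tr}(O)\Big|\le C_\ell\,2^{-n/2}$$ (i.e. each $U_{t:0}|\phi\rangle$ obeys diagonal infinite-temperature ETH on $A_s$ with constant $C_\ell$). If $$\frac{\ell\ln 2}{n/2}\ \ge\ C_\ell\,2^{-n/2}+C_\ell^2\,2^{\ell-n},$$ then for every $k$ the von Neumann entanglement entropy of $|\Psi_{k,\phi}\rangle$ across $A$ satisfies $S_A(|\Psi_{k,\phi}\rangle)\ge \ell\ln 2$.
   Context: $S_A(|\Psi\rangle)=-\mathrm{Tr}(\rho_A\ln\rho_A)$ where $\rho_A$ is the reduced density matrix of $|\Psi\rangle$ on the spin sites $A_s$ together with the clock sites $A_c$ (clock sites viewed as two-level systems). The trace $\mathrm{Tr}(O)$ is over the full $n$-qubit space, with $O$ extended by the identity outside $A_s$. *)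

theory Defs
  imports Complex_Main "Jordan_Normal_Form.Char_Poly"
begin

text \<open>Conventions. An N-qubit Hilbert space is C^(2^N); the computational basis
index i < 2^N encodes qubit q in bit q of i (library predicate bit i q).\<close>

definition cadj :: "complex mat \<Rightarrow> complex mat" where
  "cadj M = mat (dim_col M) (dim_row M) (\<lambda>(i,j). cnj (M $$ (j,i)))"

definition unitary_mat :: "nat \<Rightarrow> complex mat \<Rightarrow> bool" where
  "unitary_mat d U \<longleftrightarrow> U \<in> carrier_mat d d \<and> U * cadj U = 1\<^sub>m d \<and> cadj U * U = 1\<^sub>m d"

definition cvnorm :: "complex vec \<Rightarrow> real" where
  "cvnorm v = sqrt (\<Sum>i<dim_vec v. (cmod (v $ i))\<^sup>2)"

definition cinner :: "complex vec \<Rightarrow> complex vec \<Rightarrow> complex" where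
  "cinner v w = (\<Sum>i<dim_vec v. cnj (v $ i) * w $ i)"

definition mtrace :: "complex mat \<Rightarrow> complex" where
  "mtrace M = (\<Sum>i<dim_row M. M $$ (i,i))"

definition opnorm_le1 :: "complex mat \<Rightarrow> bool" where
  "opnorm_le1 X \<longleftrightarrow> (\<forall>v. dim_vec v = dim_col X \<longrightarrow> cvnorm (X *\<^sub>v v) \<le> cvnorm v)"

text \<open>X on N qubits is supported on the qubit set S, i.e. X = O_S \<otimes> identity
outside S, written out in the computational basis.\<close>
definition supported_on :: "nat \<Rightarrow> nat set \<Rightarrow> complex mat \<Rightarrow> bool" where
  "supported_on N S X \<longleftrightarrow> X \<in> carrier_mat (2^N) (2^N) \<and>
     (\<forall>i<2^N. \<forall>j<2^N. (\<exists>q<N. q \<notin> S \<and> bit i q \<noteq> bit j q) \<longrightarrow> X $$ (i,j) = 0) \<and>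
     (\<forall>i<2^N. \<forall>j<2^N. \<forall>i'<2^N. \<forall>j'<2^N.
        (\<forall>q<N. q \<notin> S \<longrightarrow> bit i q = bit j q) \<longrightarrow>
        (\<forall>q<N. q \<notin> S \<longrightarrow> bit i' q = bit j' q) \<longrightarrow>
        (\<forall>q\<in>S. bit i q = bit i' q \<and> bit j q = bit j' q) \<longrightarrow>
        X $$ (i,j) = X $$ (i',j'))"

fun Uprod :: "nat \<Rightarrow> (nat \<Rightarrow> complex mat) \<Rightarrow> nat \<Rightarrow> complex mat" where
  "Uprod d u 0 = 1\<^sub>m d"
| "Uprod d u (Suc t) = u t * Uprod d u t"

definition embed_bits :: "nat list \<Rightarrow> nat \<Rightarrow> nat" where
  "embed_bits a r = (\<Sum>k<length a. if bit r k then 2 ^ (a ! k) else 0)"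

text \<open>Reduced density matrix of the vector psi on N qubits, on the qubit set A
(A \<subseteq> {0..<N}); the qubits of A are ordered increasingly.\<close>
definition reduced_dm :: "nat \<Rightarrow> nat set \<Rightarrow> complex vec \<Rightarrow> complex mat" where
  "reduced_dm N A psi =
    (let a = sorted_list_of_set A; b = sorted_list_of_set ({0..<N} - A) in
     mat (2 ^ length a) (2 ^ length a)
       (\<lambda>(r, r'). \<Sum>s<2 ^ length b.
           psi $ (embed_bits a r + embed_bits b s) * cnj (psi $ (embed_bits a r' + embed_bits b s))))"

text \<open>-Tr(rho ln rho), computed from the eigenvalues of rho (roots of the
characteristic polynomial, counted with algebraic multiplicity), 0 ln 0 = 0.\<close>
definition vn_entropy :: "complex mat \<Rightarrow> real" where
  "vn_entropy rho = - (\<Sum>z\<in>{z. poly (char_poly rho) z = 0}.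
      real (order z (char_poly rho)) * (if Re z > 0 then Re z * ln (Re z) else 0))"

definition ent_entropy :: "nat \<Rightarrow> nat set \<Rightarrow> complex vec \<Rightarrow> real" where
  "ent_entropy N A psi = vn_entropy (reduced_dm N A psi)"

text \<open>The state Psi_{k,phi} on 2n qubits: spin site j is qubit j, clock site t is
qubit n+t; clock state |t> has only clock site t occupied.\<close>
definition Psi_state :: "nat \<Rightarrow> (nat \<Rightarrow> complex mat) \<Rightarrow> complex vec \<Rightarrow> real \<Rightarrow> real \<Rightarrow> complex vec" where
  "Psi_state n u v k ph = vec (2 ^ (2*n)) (\<lambda>i.
     \<Sum>t<n. if i div 2^n = 2^t then
        cis ((k - ph / real n) * real t) / complex_of_real (sqrt (real n))
          * (Uprod (2^n) u t *\<^sub>v v) $ (i mod 2^n)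
      else 0)"

end

theory Submission
  imports Defs "Jordan_Normal_Form.Schur_Decomposition"
begin


definition spow :: "nat set \<Rightarrow> nat" where "spow S = (\<Sum>p\<in>S. 2^p)"

lemma bit_spow: "finite S \<Longrightarrow> bit (spow S) q \<longleftrightarrow> q \<in> S"
proof (induction S arbitrary: q rule: finite_induct)
  case empty then show ?case by (simp add: spow_def)
next
  case (insert x S)
  have e: "spow (insert x S) = 2^x + spow S" using insert by (simp add: spow_def)
  have "bit (2^x + spow S) q \<longleftrightarrow> bit ((2::nat)^x) q \<or> bit (spow S) q"
    by (rule bit_disjunctive_add_iff) (use insert in \<open>auto simp: bit_exp_iff\<close>)
  then show ?case using insert e by (auto simp: bit_exp_iff)
qed

lemma bits_less_pow: "(\<And>k. bit (i::nat) k \<Longrightarrow> k < m) \<Longrightarrow> i < 2^m"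
proof -
  assume a: "\<And>k. bit (i::nat) k \<Longrightarrow> k < m"
  have "take_bit m i = i" by (rule bit_eqI) (use a in \<open>auto simp: bit_take_bit_iff\<close>)
  then show ?thesis by (metis take_bit_nat_less_exp)
qed

lemma less_pow_bits: "(i::nat) < 2^m \<Longrightarrow> bit i k \<Longrightarrow> k < m"
  by (metis bit_take_bit_iff take_bit_nat_eq_self_iff)

lemma embed_spow: "distinct xs \<Longrightarrow> embed_bits xs r = spow ((\<lambda>k. xs!k) ` {k. k<length xs \<and> bit r k})"
proof -
  assume d: "distinct xs"
  have "embed_bits xs r = (\<Sum>k\<in>{k. k<length xs \<and> bit r k}. 2^(xs!k))"
    unfolding embed_bits_def by (rule sum.mono_neutral_cong_right) auto
  also have "\<dots> = spow ((\<lambda>k. xs!k) ` {k. k<length xs \<and> bit r k})"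
    unfolding spow_def
    by (rule sum.reindex[symmetric, unfolded comp_def]) (use d in \<open>auto simp: inj_on_def nth_eq_iff_index_eq\<close>)
  finally show ?thesis .
qed

lemma bit_embed: "distinct xs \<Longrightarrow> bit (embed_bits xs r) q \<longleftrightarrow> (\<exists>k<length xs. xs!k = q \<and> bit r k)"
  by (auto simp: embed_spow bit_spow)

definition proj :: "nat list \<Rightarrow> nat \<Rightarrow> nat" where
  "proj xs i = spow {k. k < length xs \<and> bit i (xs!k)}"

lemma bit_proj: "bit (proj xs i) k \<longleftrightarrow> k < length xs \<and> bit i (xs!k)"
  by (simp add: proj_def bit_spow)

lemma proj_less: "proj xs i < 2^length xs"
  by (rule bits_less_pow) (simp add: bit_proj)

locale bipart =
  fixes xs ys :: "nat list" and N :: nat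
  assumes dx: "distinct xs" and dy: "distinct ys" and disj: "set xs \<inter> set ys = {}"
    and cover: "set xs \<union> set ys = {..<N}"
begin

definition emb2 :: "nat \<Rightarrow> nat \<Rightarrow> nat" where "emb2 r s = embed_bits xs r + embed_bits ys s"

lemma bit_emb2: "bit (emb2 r s) q \<longleftrightarrow> (\<exists>k<length xs. xs!k = q \<and> bit r k) \<or> (\<exists>k<length ys. ys!k = q \<and> bit s k)"
proof -
  have "bit (emb2 r s) q \<longleftrightarrow> bit (embed_bits xs r) q \<or> bit (embed_bits ys s) q"
    unfolding emb2_def
    by (rule bit_disjunctive_add_iff) (use disj in \<open>auto simp: bit_embed dx dy, metis disjoint_iff nth_mem\<close>)
  then show ?thesis by (simp add: bit_embed dx dy)
qed

lemma emb2_less: "emb2 r s < 2^N"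
proof (rule bits_less_pow)
  fix k assume "bit (emb2 r s) k"
  then have "k \<in> set xs \<union> set ys" by (auto simp: bit_emb2)
  then show "k < N" using cover by auto
qed

lemma proj_emb2_1: "r < 2^length xs \<Longrightarrow> proj xs (emb2 r s) = r"
proof (rule bit_eqI)
  fix k assume r: "r < 2^length xs"
  show "bit (proj xs (emb2 r s)) k = bit r k"
  proof
    assume "bit (proj xs (emb2 r s)) k"
    then have k: "k < length xs" and b: "bit (emb2 r s) (xs!k)" by (auto simp: bit_proj)
    from b show "bit r k" unfolding bit_emb2
    proof
      assume "\<exists>k'<length xs. xs!k' = xs!k \<and> bit r k'"
      then show ?thesis using k dx by (auto simp: nth_eq_iff_index_eq)
    next
      assume "\<exists>k'<length ys. ys!k' = xs!k \<and> bit s k'"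
      then show ?thesis using k disj by (metis disjoint_iff nth_mem)
    qed
  next
    assume "bit r k"
    moreover have "k < length xs" using less_pow_bits[OF r] calculation .
    ultimately show "bit (proj xs (emb2 r s)) k" by (auto simp: bit_proj bit_emb2)
  qed
qed

lemma proj_emb2_2: "s < 2^length ys \<Longrightarrow> proj ys (emb2 r s) = s"
proof (rule bit_eqI)
  fix k assume r: "s < 2^length ys"
  show "bit (proj ys (emb2 r s)) k = bit s k"
  proof
    assume "bit (proj ys (emb2 r s)) k"
    then have k: "k < length ys" and b: "bit (emb2 r s) (ys!k)" by (auto simp: bit_proj)
    from b show "bit s k" unfolding bit_emb2
    proof
      assume "\<exists>k'<length ys. ys!k' = ys!k \<and> bit s k'"
      then show ?thesis using k dy by (auto simp: nth_eq_iff_index_eq)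
    next
      assume "\<exists>k'<length xs. xs!k' = ys!k \<and> bit r k'"
      then show ?thesis using k disj by (metis disjoint_iff nth_mem)
    qed
  next
    assume "bit s k"
    moreover have "k < length ys" using less_pow_bits[OF r] calculation .
    ultimately show "bit (proj ys (emb2 r s)) k" by (auto simp: bit_proj bit_emb2)
  qed
qed

lemma emb2_proj: "i < 2^N \<Longrightarrow> emb2 (proj xs i) (proj ys i) = i"
proof (rule bit_eqI)
  fix q assume i: "i < 2^N"
  show "bit (emb2 (proj xs i) (proj ys i)) q = bit i q"
  proof
    assume "bit (emb2 (proj xs i) (proj ys i)) q"
    then show "bit i q" by (auto simp: bit_emb2 bit_proj)
  next
    assume b: "bit i q"
    then have "q < N" using less_pow_bits[OF i] by auto
    then have "q \<in> set xs \<or> q \<in> set ys" using cover by auto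
    then show "bit (emb2 (proj xs i) (proj ys i)) q"
      using b by (auto simp: bit_emb2 bit_proj in_set_conv_nth)
  qed
qed

lemma emb2_bij: "bij_betw (\<lambda>(r,s). emb2 r s) ({..<2^length xs} \<times> {..<2^length ys}) {..<2^N}"
proof (rule bij_betw_byWitness[where f' = "\<lambda>i. (proj xs i, proj ys i)"])
  show "\<forall>a\<in>{..<2 ^ length xs} \<times> {..<2 ^ length ys}. (\<lambda>i. (proj xs i, proj ys i)) (case a of (r, s) \<Rightarrow> emb2 r s) = a"
    by (auto simp: proj_emb2_1 proj_emb2_2)
  show "\<forall>a'\<in>{..<2 ^ N}. (case (proj xs a', proj ys a') of (r, s) \<Rightarrow> emb2 r s) = a'"
    by (auto simp: emb2_proj)
  show "(\<lambda>(r, s). emb2 r s) ` ({..<2 ^ length xs} \<times> {..<2 ^ length ys}) \<subseteq> {..<2 ^ N}"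
    using emb2_less by auto
  show "(\<lambda>i. (proj xs i, proj ys i)) ` {..<2 ^ N} \<subseteq> {..<2 ^ length xs} \<times> {..<2 ^ length ys}"
    using proj_less by auto
qed

lemma sum_split: "(\<Sum>i<2^N. f i) = (\<Sum>r<2^length xs. \<Sum>s<2^length ys. f (emb2 r s))"
proof -
  have "(\<Sum>i<2^N. f i) = (\<Sum>p\<in>{..<2^length xs} \<times> {..<2^length ys}. f ((\<lambda>(r,s). emb2 r s) p))"
    by (rule sum.reindex_bij_betw[symmetric, OF emb2_bij])
  also have "\<dots> = (\<Sum>r<2^length xs. \<Sum>s<2^length ys. f (emb2 r s))"
    by (simp add: sum.cartesian_product split_def)
  finally show ?thesis .
qed

lemma emb2_inj: "r < 2^length xs \<Longrightarrow> s < 2^length ys \<Longrightarrow> r' < 2^length xs \<Longrightarrow> s' < 2^length ys \<Longrightarrow>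
   emb2 r s = emb2 r' s' \<longleftrightarrow> r = r' \<and> s = s'"
  by (metis proj_emb2_1 proj_emb2_2)

end


lemma sum_single: "finite A \<Longrightarrow> i \<in> A \<Longrightarrow> (\<And>k. k \<in> A \<Longrightarrow> k \<noteq> i \<Longrightarrow> f k = 0) \<Longrightarrow> sum f A = f i"
  by (subst sum.mono_neutral_right[of A "{i}"]) auto


lemma mtrace_comm:
  assumes A: "A \<in> carrier_mat d e" and B: "B \<in> carrier_mat e d"
  shows "mtrace (A*B) = mtrace (B*A)"
proof -
  have "mtrace (A*B) = (\<Sum>i<d. \<Sum>k<e. A$$(i,k) * B$$(k,i))"
    unfolding mtrace_def using A B
    by (simp add: index_mult_mat scalar_prod_def atLeast0LessThan)
  also have "\<dots> = (\<Sum>k<e. \<Sum>i<d. B$$(k,i) * A$$(i,k))"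
    by (subst sum.swap) (simp add: mult.commute)
  also have "\<dots> = mtrace (B*A)"
    unfolding mtrace_def using A B
    by (simp add: index_mult_mat scalar_prod_def atLeast0LessThan)
  finally show ?thesis .
qed

lemma mtrace_upper_sq:
  assumes B: "B \<in> carrier_mat d d" and ut: "upper_triangular B"
  shows "mtrace (B*B) = (\<Sum>i<d. (B$$(i,i))^2)"
proof -
  have "mtrace (B*B) = (\<Sum>i<d. \<Sum>k<d. B$$(i,k) * B$$(k,i))"
    unfolding mtrace_def using B
    by (simp add: index_mult_mat scalar_prod_def atLeast0LessThan)
  also have "\<dots> = (\<Sum>i<d. (B$$(i,i))^2)"
  proof (rule sum.cong[OF refl])
    fix i assume i: "i \<in> {..<d}"
    have "(\<Sum>k<d. B$$(i,k) * B$$(k,i)) = B$$(i,i) * B$$(i,i)"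
    proof (rule sum_single)
      fix k assume k: "k \<in> {..<d}" "k \<noteq> i"
      show "B$$(i,k) * B$$(k,i) = 0"
      proof (cases "k < i")
        case True then show ?thesis using ut B i unfolding upper_triangular_def by auto
      next
        case False then have "i < k" using k by auto
        then show ?thesis using ut B k unfolding upper_triangular_def by auto
      qed
    qed (use i in auto)
    then show "(\<Sum>k<d. B$$(i,k) * B$$(k,i)) = (B$$(i,i))^2" by (simp add: power2_eq_square)
  qed
  finally show ?thesis .
qed

lemma order_prod_linear: "Polynomial.order z (\<Prod>a\<leftarrow>as. [:- a, 1:]) = count_list as (z::complex)"
proof (induction as)
  case Nil then show ?case by (simp add: order_0I)
next
  case (Cons a as)
  have nz: "(\<Prod>a\<leftarrow>as. [:- a, 1:]) \<noteq> 0" by (auto simp: prod_list_zero_iff)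
  have l0: "[:- a, 1:] \<noteq> (0::complex poly)" by simp
  have "[:- a, 1:] * (\<Prod>a\<leftarrow>as. [:- a, 1:]) \<noteq> 0" using l0 nz by (rule no_zero_divisors)
  then have "Polynomial.order z (\<Prod>a\<leftarrow>a#as. [:- a, 1:]) = Polynomial.order z [:- a, 1:] + Polynomial.order z (\<Prod>a\<leftarrow>as. [:- a, 1:])"
    by (simp only: list.map prod_list.Cons) (rule order_mult)
  then show ?case using Cons by (simp add: order_linear')
qed



lemma real_entropy_ineq:
  fixes lam :: "nat \<Rightarrow> real"
  assumes nn: "\<And>i. i < d \<Longrightarrow> lam i \<ge> 0" and s1: "(\<Sum>i<d. lam i) = 1"
  shows "(\<Sum>i<d. if lam i > 0 then lam i * ln (lam i) else 0) \<le> ln (\<Sum>i<d. (lam i)^2)"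
proof -
  define Q where "Q = (\<Sum>i<d. (lam i)^2)"
  have "\<exists>i<d. lam i > 0"
  proof (rule ccontr)
    assume "\<not> ?thesis"
    then have "\<forall>i<d. lam i = 0" using nn by force
    then have "(\<Sum>i<d. lam i) = 0" by simp
    then show False using s1 by simp
  qed
  then obtain j where j: "j < d" "lam j > 0" by auto
  have Qpos: "Q > 0" unfolding Q_def
    by (rule sum_pos2[of _ j]) (use j in auto)
  have "(\<Sum>i<d. if lam i > 0 then lam i * ln (lam i) else 0) - ln Q
      = (\<Sum>i<d. (if lam i > 0 then lam i * ln (lam i) else 0) - lam i * ln Q)"
    by (simp add: sum_subtractf sum_distrib_right[symmetric] s1)
  also have "\<dots> \<le> (\<Sum>i<d. (lam i)^2 / Q - lam i)"
  proof (rule sum_mono)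
    fix i assume i: "i \<in> {..<d}"
    show "(if lam i > 0 then lam i * ln (lam i) else 0) - lam i * ln Q \<le> (lam i)^2 / Q - lam i"
    proof (cases "lam i > 0")
      case True
      have "ln (lam i / Q) \<le> lam i / Q - 1" by (rule ln_le_minus_one) (use True Qpos in auto)
      then have "lam i * ln (lam i / Q) \<le> lam i * (lam i / Q - 1)"
        using True by (intro mult_left_mono) auto
      moreover have "ln (lam i / Q) = ln (lam i) - ln Q" using True Qpos by (simp add: ln_div)
      ultimately show ?thesis using True by (simp add: algebra_simps power2_eq_square)
    next
      case False then have "lam i = 0" using nn i by force
      then show ?thesis by simp
    qed
  qed
  also have "\<dots> = 0" using Qpos s1 by (simp add: sum_subtractf sum_divide_distrib[symmetric] Q_def)
  finally show ?thesis unfolding Q_def by simp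
qed



lemma sum_list_count_gen:
  fixes f :: "'a \<Rightarrow> 'b::comm_semiring_1"
  shows "sum_list (map f xs) = (\<Sum>x\<in>set xs. of_nat (count_list xs x) * f x)"
proof (induction xs)
  case Nil show ?case by simp
next
  case (Cons x xs)
  have A: "(\<Sum>z\<in>insert x (set xs). of_nat (count_list xs z) * f z) = (\<Sum>z\<in>set xs. of_nat (count_list xs z) * f z)"
    by (rule sum.mono_neutral_right) (auto simp: count_list_0_iff)
  have B: "(\<Sum>z\<in>insert x (set xs). (if x = z then f z else 0)) = f x" by (simp add: sum.delta sum.delta')
  have "(\<Sum>z\<in>set (x#xs). of_nat (count_list (x#xs) z) * f z) = (\<Sum>z\<in>insert x (set xs). of_nat (count_list xs z) * f z + (if x = z then f z else 0))"
    by (intro sum.cong) (auto simp: algebra_simps)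
  also have "\<dots> = sum_list (map f (x#xs))" using A B Cons by (simp add: sum.distrib add.commute)
  finally show ?case ..
qed

lemma entropy_bound:
  fixes M :: "nat \<Rightarrow> nat \<Rightarrow> complex"
  assumes R: "R = mat d d (\<lambda>(r,r'). \<Sum>s<D. M r s * cnj (M r' s))"
    and tr: "(\<Sum>r<d. R $$ (r,r)) = 1"
  shows "vn_entropy R \<ge> - ln (\<Sum>r<d. \<Sum>r'<d. (cmod (R$$(r,r')))^2)"
proof -
  have Rc: "R \<in> carrier_mat d d" using R by simp
  obtain as where cp: "char_poly R = (\<Prod>a\<leftarrow>as. [:- a, 1:])" and las: "length as = d"
    using char_poly_factorized[OF Rc] by blast
  obtain B P Q where sd: "schur_decomposition R as = (B,P,Q)" by (cases "schur_decomposition R as") auto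
  from schur_decomposition[OF Rc cp sd] have sim: "similar_mat_wit R B P Q"
    and ut: "upper_triangular B" and dg: "diag_mat B = as" by auto
  have dR: "dim_row R = d" using Rc by simp
  from sim have Bc: "B \<in> carrier_mat d d" and Pc: "P \<in> carrier_mat d d" and Qc: "Q \<in> carrier_mat d d"
    and PQ: "P * Q = 1\<^sub>m d" and QP: "Q * P = 1\<^sub>m d" and RPBQ: "R = P * B * Q"
    unfolding similar_mat_wit_def Let_def dR by auto
  have asi: "\<And>i. i < d \<Longrightarrow> as ! i = B $$ (i,i)"
    using dg Bc las by (auto simp: diag_mat_def)
  have trB: "mtrace (P * X * Q) = mtrace X" if X: "X \<in> carrier_mat d d" for X
  proof -
    have "mtrace (P * X * Q) = mtrace (Q * (P * X))"
      by (rule mtrace_comm[of _ d d]) (use Pc Qc X in auto)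
    also have "Q * (P * X) = (Q * P) * X" using Pc Qc X by (simp add: assoc_mult_mat)
    also have "\<dots> = X" using QP X by simp
    finally show ?thesis .
  qed
  have RR: "R * R = P * (B * B) * Q"
  proof -
    have "R * R = P * B * (Q * P) * B * Q" unfolding RPBQ using Pc Bc Qc
      by (simp add: assoc_mult_mat[of _ d d _ d _ d])
    also have "\<dots> = P * (B * B) * Q" using QP Pc Bc Qc
      by (simp add: assoc_mult_mat[of _ d d _ d _ d])
    finally show ?thesis .
  qed
  have sum_as: "(\<Sum>i<d. as ! i) = 1"
  proof -
    have "(\<Sum>i<d. as ! i) = mtrace B" unfolding mtrace_def using Bc asi by simp
    also have "\<dots> = mtrace R" using trB[OF Bc] RPBQ by simp
    also have "\<dots> = 1" using tr dR unfolding mtrace_def by simp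
    finally show ?thesis .
  qed
  have Rherm: "R $$ (r',r) = cnj (R $$ (r,r'))" if "r < d" "r' < d" for r r'
    using that R by (simp add: mult.commute)
  have sum_sq: "(\<Sum>i<d. (as ! i)^2) = (\<Sum>r<d. \<Sum>r'<d. complex_of_real ((cmod (R$$(r,r')))^2))"
  proof -
    have "(\<Sum>i<d. (as ! i)^2) = mtrace (B*B)" using mtrace_upper_sq[OF Bc ut] asi by simp
    also have "\<dots> = mtrace (R*R)" using trB[of "B*B"] Bc RR by simp
    also have "\<dots> = (\<Sum>r<d. \<Sum>r'<d. R$$(r,r') * R$$(r',r))"
      unfolding mtrace_def using Rc by (simp add: index_mult_mat scalar_prod_def atLeast0LessThan)
    also have "\<dots> = (\<Sum>r<d. \<Sum>r'<d. complex_of_real ((cmod (R$$(r,r')))^2))"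
    proof (intro sum.cong refl)
      fix r r' assume "r \<in> {..<d}" "r' \<in> {..<d}"
      then have "R$$(r',r) = cnj (R$$(r,r'))" by (intro Rherm) auto
      then show "R$$(r,r') * R$$(r',r) = complex_of_real ((cmod (R$$(r,r')))^2)"
        unfolding complex_norm_square by simp
    qed
    finally show ?thesis .
  qed
  have eig_real: "as ! i = complex_of_real (Re (as ! i)) \<and> Re (as ! i) \<ge> 0" if i: "i < d" for i
  proof -
    let ?a = "as ! i"
    have "poly (char_poly R) ?a = 0" unfolding cp by (rule linear_poly_root) (use i las in auto)
    then have "eigenvalue R ?a" using eigenvalue_root_char_poly[OF Rc] by simp
    then obtain v where v: "v \<in> carrier_vec d" "v \<noteq> 0\<^sub>v d" "R *\<^sub>v v = ?a \<cdot>\<^sub>v v"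
      unfolding eigenvalue_def eigenvector_def dR by auto
    define z where "z s = (\<Sum>r<d. cnj (v$r) * M r s)" for s
    have lhs: "(\<Sum>r<d. cnj (v$r) * (R *\<^sub>v v)$r) = (\<Sum>s<D. complex_of_real ((cmod (z s))^2))"
    proof -
      have "(\<Sum>r<d. cnj (v$r) * (R *\<^sub>v v)$r) = (\<Sum>r<d. cnj (v$r) * (\<Sum>r'<d. (\<Sum>s<D. M r s * cnj (M r' s)) * v$r'))"
        using v(1) R by (simp add: mult_mat_vec_def scalar_prod_def atLeast0LessThan)
      also have "\<dots> = (\<Sum>r<d. \<Sum>r'<d. \<Sum>s<D. cnj (v$r) * M r s * (cnj (M r' s) * v$r'))"
        by (simp add: sum_distrib_left sum_distrib_right mult_ac)
      also have "\<dots> = (\<Sum>r<d. \<Sum>s<D. \<Sum>r'<d. cnj (v$r) * M r s * (cnj (M r' s) * v$r'))"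
        by (rule sum.cong[OF refl], rule sum.swap)
      also have "\<dots> = (\<Sum>s<D. \<Sum>r<d. \<Sum>r'<d. cnj (v$r) * M r s * (cnj (M r' s) * v$r'))"
        by (rule sum.swap)
      also have "\<dots> = (\<Sum>s<D. (\<Sum>r<d. cnj (v$r) * M r s) * (\<Sum>r'<d. cnj (M r' s) * v$r'))"
        by (simp add: sum_product)
      also have "\<dots> = (\<Sum>s<D. complex_of_real ((cmod (z s))^2))"
        unfolding complex_norm_square z_def by (intro sum.cong refl) (simp add: mult.commute sum_distrib_left)
      finally show ?thesis .
    qed
    have rhs: "(\<Sum>r<d. cnj (v$r) * (?a \<cdot>\<^sub>v v)$r) = ?a * (\<Sum>r<d. complex_of_real ((cmod (v$r))^2))"
      unfolding complex_norm_square using v(1) by (simp add: sum_distrib_left mult_ac)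
    have Vpos: "(\<Sum>r<d. (cmod (v$r))^2) > 0"
    proof -
      obtain r where r: "r < d" "v $ r \<noteq> 0"
      proof -
        have "\<not>(\<forall>r<d. v$r = 0)"
        proof
          assume "\<forall>r<d. v$r = 0"
          then have "v = 0\<^sub>v d" using v(1) by (intro eq_vecI) auto
          then show False using v(2) by simp
        qed
        then show ?thesis using that by auto
      qed
      show ?thesis by (rule sum_pos2[of _ r]) (use r in auto)
    qed
    define V where "V = (\<Sum>r<d. (cmod (v$r))^2)"
    define W where "W = (\<Sum>s<D. (cmod (z s))^2)"
    have "?a * complex_of_real V = complex_of_real W"
      using lhs rhs v(3) unfolding V_def W_def of_real_sum by simp
    moreover have "complex_of_real V \<noteq> 0" using Vpos unfolding V_def[symmetric] by simp
    ultimately have "?a = complex_of_real W / complex_of_real V" by (simp add: eq_divide_eq)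
    then have "?a = complex_of_real (W / V)" by simp
    moreover have "W / V \<ge> 0" unfolding W_def V_def by (intro divide_nonneg_nonneg sum_nonneg) auto
    ultimately show ?thesis by simp
  qed
  define lam where "lam i = Re (as ! i)" for i
  have lam_nn: "\<And>i. i < d \<Longrightarrow> lam i \<ge> 0" using eig_real lam_def by auto
  have lam_sum: "(\<Sum>i<d. lam i) = 1"
    using arg_cong[OF sum_as, of Re] by (simp add: lam_def)
  have lam_sq: "(\<Sum>i<d. (lam i)^2) = (\<Sum>r<d. \<Sum>r'<d. (cmod (R$$(r,r')))^2)"
  proof -
    have "(\<Sum>i<d. (lam i)^2) = Re (\<Sum>i<d. (as ! i)^2)"
    proof -
      have "(\<Sum>i<d. (as ! i)^2) = (\<Sum>i<d. complex_of_real ((lam i)^2))"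
        by (intro sum.cong refl) (metis eig_real lam_def lessThan_iff of_real_power)
      then show ?thesis by simp
    qed
    also have "\<dots> = (\<Sum>r<d. \<Sum>r'<d. (cmod (R$$(r,r')))^2)" unfolding sum_sq by simp
    finally show ?thesis .
  qed
  have roots: "{z. poly (char_poly R) z = 0} = set as"
    unfolding cp by (auto simp: poly_prod_list_zero_iff)
  define h where "h z = (if Re z > 0 then Re z * ln (Re z) else 0)" for z :: complex
  have "vn_entropy R = - (\<Sum>z\<in>set as. real (count_list as z) * h z)"
    unfolding vn_entropy_def roots unfolding cp order_prod_linear h_def by simp
  also have "(\<Sum>z\<in>set as. real (count_list as z) * h z) = sum_list (map h as)"
    by (simp add: sum_list_count_gen)
  also have "\<dots> = (\<Sum>i<d. h (as ! i))"
    by (simp add: sum_list_sum_nth atLeast0LessThan las)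
  also have "\<dots> = (\<Sum>i<d. if lam i > 0 then lam i * ln (lam i) else 0)"
    by (simp only: h_def lam_def)
  finally have "vn_entropy R = - (\<Sum>i<d. if lam i > 0 then lam i * ln (lam i) else 0)" .
  with real_entropy_ineq[OF lam_nn lam_sum] lam_sq show ?thesis by simp
qed


lemma real_cs:
  fixes a b :: "'a \<Rightarrow> real"
  assumes fin: "finite I"
  shows "(\<Sum>i\<in>I. a i * b i)\<^sup>2 \<le> (\<Sum>i\<in>I. (a i)\<^sup>2) * (\<Sum>i\<in>I. (b i)\<^sup>2)"
proof (cases "(\<Sum>i\<in>I. (b i)\<^sup>2) = 0")
  case True
  then have "\<forall>i\<in>I. b i = 0" using fin by (simp add: sum_nonneg_eq_0_iff)
  then show ?thesis by simp
next
  case False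
  define B where "B = (\<Sum>i\<in>I. (b i)\<^sup>2)"
  define C where "C = (\<Sum>i\<in>I. a i * b i)"
  define A where "A = (\<Sum>i\<in>I. (a i)\<^sup>2)"
  have Bpos: "B > 0" using False unfolding B_def by (simp add: less_le sum_nonneg)
  define r where "r = C / B"
  have "0 \<le> (\<Sum>i\<in>I. (a i - r * b i)\<^sup>2)" by (simp add: sum_nonneg)
  also have "\<dots> = A - 2 * r * C + r\<^sup>2 * B"
    unfolding A_def B_def C_def
    by (simp add: power2_eq_square algebra_simps sum_distrib_left sum_subtractf sum.distrib)
  also have "\<dots> = A - C\<^sup>2 / B" using Bpos unfolding r_def by (simp add: power2_eq_square field_simps)
  finally have "C\<^sup>2 / B \<le> A" by simp
  then have "C\<^sup>2 \<le> A * B" using Bpos by (simp add: divide_le_eq)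
  then show ?thesis unfolding A_def B_def C_def .
qed

lemma complex_cs:
  fixes x y :: "'a \<Rightarrow> complex"
  assumes fin: "finite I"
  shows "(cmod (\<Sum>i\<in>I. x i * y i))\<^sup>2 \<le> (\<Sum>i\<in>I. (cmod (x i))\<^sup>2) * (\<Sum>i\<in>I. (cmod (y i))\<^sup>2)"
proof -
  have "cmod (\<Sum>i\<in>I. x i * y i) \<le> (\<Sum>i\<in>I. cmod (x i) * cmod (y i))"
    by (rule order_trans[OF norm_sum]) (simp add: norm_mult)
  then have "(cmod (\<Sum>i\<in>I. x i * y i))\<^sup>2 \<le> (\<Sum>i\<in>I. cmod (x i) * cmod (y i))\<^sup>2"
    by (rule power_mono) simp
  also have "\<dots> \<le> (\<Sum>i\<in>I. (cmod (x i))\<^sup>2) * (\<Sum>i\<in>I. (cmod (y i))\<^sup>2)"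
    by (rule real_cs[OF fin])
  finally show ?thesis .
qed

lemma complex_cs_card:
  fixes z :: "'a \<Rightarrow> complex"
  assumes fin: "finite I"
  shows "(cmod (\<Sum>i\<in>I. z i))\<^sup>2 \<le> real (card I) * (\<Sum>i\<in>I. (cmod (z i))\<^sup>2)"
  using complex_cs[OF fin, of z "\<lambda>_. 1"] by (simp add: mult.commute)

lemma frob_swap:
  fixes f g :: "nat \<Rightarrow> nat \<Rightarrow> complex"
  shows "(\<Sum>r<R. \<Sum>r'<R. (\<Sum>s<S. f r s * cnj (g r' s)) * cnj (\<Sum>s<S. f r s * cnj (g r' s)))
       = (\<Sum>s<S. \<Sum>s'<S. (\<Sum>r<R. f r s * cnj (f r s')) * cnj (\<Sum>r'<R. g r' s * cnj (g r' s')))"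
proof -
  have "(\<Sum>r<R. \<Sum>r'<R. (\<Sum>s<S. f r s * cnj (g r' s)) * cnj (\<Sum>s<S. f r s * cnj (g r' s)))
      = (\<Sum>r<R. \<Sum>r'<R. \<Sum>s'<S. \<Sum>s<S. f r s * cnj (f r s') * (cnj (g r' s) * g r' s'))"
    by (simp add: sum_distrib_left sum_distrib_right mult_ac)
  also have "\<dots> = (\<Sum>r<R. \<Sum>r'<R. \<Sum>s<S. \<Sum>s'<S. f r s * cnj (f r s') * (cnj (g r' s) * g r' s'))"
    by (rule sum.cong[OF refl], rule sum.cong[OF refl], rule sum.swap)
  also have "\<dots> = (\<Sum>s<S. \<Sum>s'<S. \<Sum>r<R. \<Sum>r'<R. f r s * cnj (f r s') * (cnj (g r' s) * g r' s'))"
  proof -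
    have "(\<Sum>r<R. \<Sum>r'<R. \<Sum>s<S. \<Sum>s'<S. f r s * cnj (f r s') * (cnj (g r' s) * g r' s'))
        = (\<Sum>r<R. \<Sum>s<S. \<Sum>s'<S. \<Sum>r'<R. f r s * cnj (f r s') * (cnj (g r' s) * g r' s'))"
    proof (rule sum.cong[OF refl])
      fix r
      show "(\<Sum>r'<R. \<Sum>s<S. \<Sum>s'<S. f r s * cnj (f r s') * (cnj (g r' s) * g r' s'))
          = (\<Sum>s<S. \<Sum>s'<S. \<Sum>r'<R. f r s * cnj (f r s') * (cnj (g r' s) * g r' s'))"
        by (subst sum.swap) (rule sum.cong[OF refl], rule sum.swap)
    qed
    also have "\<dots> = (\<Sum>s<S. \<Sum>r<R. \<Sum>s'<S. \<Sum>r'<R. f r s * cnj (f r s') * (cnj (g r' s) * g r' s'))"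
      by (rule sum.swap)
    also have "\<dots> = (\<Sum>s<S. \<Sum>s'<S. \<Sum>r<R. \<Sum>r'<R. f r s * cnj (f r s') * (cnj (g r' s) * g r' s'))"
      by (rule sum.cong[OF refl], rule sum.swap)
    finally show ?thesis .
  qed
  also have "\<dots> = (\<Sum>s<S. \<Sum>s'<S. \<Sum>r'<R. \<Sum>r<R. f r s * cnj (f r s') * (cnj (g r' s) * g r' s'))"
    by (rule sum.cong[OF refl], rule sum.cong[OF refl], rule sum.swap)
  also have "\<dots> = (\<Sum>s<S. \<Sum>s'<S. (\<Sum>r<R. f r s * cnj (f r s')) * cnj (\<Sum>r'<R. g r' s * cnj (g r' s')))"
    by (simp add: sum_distrib_left sum_distrib_right mult_ac)
  finally show ?thesis .
qed

lemma sq_as_prod: "complex_of_real ((cmod z)\<^sup>2) = z * cnj z"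
  by (rule complex_norm_square)

lemma frob_cross_bound:
  fixes f g :: "nat \<Rightarrow> nat \<Rightarrow> complex"
  assumes Pf: "(\<Sum>r<R. \<Sum>r'<R. (cmod (\<Sum>s<S. f r s * cnj (f r' s)))\<^sup>2) \<le> P"
    and Pg: "(\<Sum>r<R. \<Sum>r'<R. (cmod (\<Sum>s<S. g r s * cnj (g r' s)))\<^sup>2) \<le> P"
  shows "(\<Sum>r<R. \<Sum>r'<R. (cmod (\<Sum>s<S. f r s * cnj (g r' s)))\<^sup>2) \<le> P"
proof -
  define Zf where "Zf s s' = (\<Sum>r<R. f r s * cnj (f r s'))" for s s'
  define Zg where "Zg s s' = (\<Sum>r<R. g r s * cnj (g r s'))" for s s'
  have key: "\<And>f g. complex_of_real (\<Sum>r<R. \<Sum>r'<R. (cmod (\<Sum>s<S. f r s * cnj (g r' s)))\<^sup>2)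
       = (\<Sum>s<S. \<Sum>s'<S. (\<Sum>r<R. f r s * cnj (f r s')) * cnj (\<Sum>r'<R. g r' s * cnj (g r' s')))"
    unfolding of_real_sum sq_as_prod by (rule frob_swap)
  have P0: "0 \<le> P"
  proof -
    have "0 \<le> (\<Sum>r<R. \<Sum>r'<R. (cmod (\<Sum>s<S. f r s * cnj (f r' s)))\<^sup>2)" by (intro sum_nonneg) auto
    then show "0 \<le> P" using Pf by linarith
  qed
  have nf: "(\<Sum>r<R. \<Sum>r'<R. (cmod (\<Sum>s<S. f r s * cnj (f r' s)))\<^sup>2) = (\<Sum>s<S. \<Sum>s'<S. (cmod (Zf s s'))\<^sup>2)"
  proof -
    have "complex_of_real (\<Sum>r<R. \<Sum>r'<R. (cmod (\<Sum>s<S. f r s * cnj (f r' s)))\<^sup>2)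
        = complex_of_real (\<Sum>s<S. \<Sum>s'<S. (cmod (Zf s s'))\<^sup>2)"
      unfolding key[of f f] unfolding of_real_sum sq_as_prod Zf_def ..
    then show ?thesis using of_real_eq_iff by blast
  qed
  have ng: "(\<Sum>r<R. \<Sum>r'<R. (cmod (\<Sum>s<S. g r s * cnj (g r' s)))\<^sup>2) = (\<Sum>s<S. \<Sum>s'<S. (cmod (Zg s s'))\<^sup>2)"
  proof -
    have "complex_of_real (\<Sum>r<R. \<Sum>r'<R. (cmod (\<Sum>s<S. g r s * cnj (g r' s)))\<^sup>2)
        = complex_of_real (\<Sum>s<S. \<Sum>s'<S. (cmod (Zg s s'))\<^sup>2)"
      unfolding key[of g g] unfolding of_real_sum sq_as_prod Zg_def ..
    then show ?thesis using of_real_eq_iff by blast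
  qed
  have eqc: "complex_of_real (\<Sum>r<R. \<Sum>r'<R. (cmod (\<Sum>s<S. f r s * cnj (g r' s)))\<^sup>2)
      = (\<Sum>p\<in>{..<S} \<times> {..<S}. Zf (fst p) (snd p) * cnj (Zg (fst p) (snd p)))"
    unfolding key[of f g] Zf_def Zg_def by (simp add: sum.cartesian_product split_def)
  have "(\<Sum>r<R. \<Sum>r'<R. (cmod (\<Sum>s<S. f r s * cnj (g r' s)))\<^sup>2)
      = cmod (\<Sum>p\<in>{..<S} \<times> {..<S}. Zf (fst p) (snd p) * cnj (Zg (fst p) (snd p)))"
  proof -
    let ?X = "(\<Sum>r<R. \<Sum>r'<R. (cmod (\<Sum>s<S. f r s * cnj (g r' s)))\<^sup>2)"
    have nn: "0 \<le> ?X" by (intro sum_nonneg) auto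
    have "cmod (complex_of_real ?X) = ?X" by (simp only: norm_of_real abs_of_nonneg[OF nn])
    from this[unfolded eqc] show ?thesis by (rule sym)
  qed
  also have "\<dots> \<le> sqrt ((\<Sum>p\<in>{..<S} \<times> {..<S}. (cmod (Zf (fst p) (snd p)))\<^sup>2) * (\<Sum>p\<in>{..<S} \<times> {..<S}. (cmod (cnj (Zg (fst p) (snd p))))\<^sup>2))"
    by (rule real_le_rsqrt, rule complex_cs) auto
  also have "\<dots> = sqrt ((\<Sum>s<S. \<Sum>s'<S. (cmod (Zf s s'))\<^sup>2) * (\<Sum>s<S. \<Sum>s'<S. (cmod (Zg s s'))\<^sup>2))"
    by (simp add: sum.cartesian_product split_def)
  also have "\<dots> \<le> sqrt (P * P)"
    using Pf Pg P0 unfolding nf ng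
    by (intro real_sqrt_le_mono mult_mono) (auto intro!: sum_nonneg)
  also have "\<dots> = P"
  proof -
    have "0 \<le> (\<Sum>r<R. \<Sum>r'<R. (cmod (\<Sum>s<S. f r s * cnj (f r' s)))\<^sup>2)" by (intro sum_nonneg) auto
    then have "0 \<le> P" using Pf by linarith
    then show ?thesis by simp
  qed
  finally show ?thesis .
qed


lemma inj_sum_sq:
  fixes z :: "'a \<Rightarrow> complex" and a :: "'a \<Rightarrow> nat"
  assumes fin: "finite T" and inj: "inj_on a T" and rng: "a ` T \<subseteq> {..<N}"
  shows "(\<Sum>r<N. (cmod (\<Sum>t\<in>T. if r = a t then z t else 0))\<^sup>2) = (\<Sum>t\<in>T. (cmod (z t))\<^sup>2)"
proof -
  define F where "F r = (cmod (\<Sum>t\<in>T. if r = a t then z t else 0))\<^sup>2" for r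
  have "(\<Sum>r<N. F r) = (\<Sum>r\<in>a ` T. F r)"
  proof (rule sum.mono_neutral_right)
    show "\<forall>r\<in>{..<N} - a ` T. F r = 0"
    proof
      fix r assume "r \<in> {..<N} - a ` T"
      then have "\<forall>t\<in>T. r \<noteq> a t" by auto
      then show "F r = 0" unfolding F_def by simp
    qed
  qed (use rng in auto)
  also have "\<dots> = (\<Sum>t\<in>T. F (a t))" by (rule sum.reindex[OF inj, unfolded comp_def])
  also have "\<dots> = (\<Sum>t\<in>T. (cmod (z t))\<^sup>2)"
  proof (rule sum.cong[OF refl])
    fix t assume t: "t \<in> T"
    have "(\<Sum>t'\<in>T. if a t = a t' then z t' else 0) = (if a t = a t then z t else 0)"
      by (rule sum_single[OF fin t]) (use inj t in \<open>auto simp: inj_on_def\<close>)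
    then show "F (a t) = (cmod (z t))\<^sup>2" unfolding F_def by simp
  qed
  finally show ?thesis unfolding F_def .
qed

locale purity =
  fixes n L M R S l :: nat and inJ :: "nat \<Rightarrow> bool" and a b :: "nat \<Rightarrow> nat"
    and c :: "nat \<Rightarrow> complex" and \<phi> :: "nat \<Rightarrow> nat \<Rightarrow> nat \<Rightarrow> complex" and Pm :: real
  assumes a_lt: "\<And>t. t < n \<Longrightarrow> a t < 2^L"
    and b_lt: "\<And>t. t < n \<Longrightarrow> b t < 2^M"
    and J1: "\<And>t. t < n \<Longrightarrow> inJ t \<Longrightarrow> b t = 0 \<and> a t \<noteq> 0"
    and K1: "\<And>t. t < n \<Longrightarrow> \<not> inJ t \<Longrightarrow> a t = 0 \<and> b t \<noteq> 0"
    and a_inj: "\<And>t t'. t < n \<Longrightarrow> t' < n \<Longrightarrow> inJ t \<Longrightarrow> inJ t' \<Longrightarrow> a t = a t' \<Longrightarrow> t = t'"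
    and b_inj: "\<And>t t'. t < n \<Longrightarrow> t' < n \<Longrightarrow> \<not> inJ t \<Longrightarrow> \<not> inJ t' \<Longrightarrow> b t = b t' \<Longrightarrow> t = t'"
    and c_abs: "\<And>t. t < n \<Longrightarrow> (cmod (c t))\<^sup>2 = 1 / real n"
    and cardJ: "card {t. t < n \<and> inJ t} = l"
    and P_bd: "\<And>t. t < n \<Longrightarrow> (\<Sum>r<R. \<Sum>r'<R. (cmod (\<Sum>s<S. \<phi> t r s * cnj (\<phi> t r' s)))\<^sup>2) \<le> Pm"
    and tr1: "\<And>t. t < n \<Longrightarrow> (\<Sum>r<R. \<Sum>s<S. \<phi> t r s * cnj (\<phi> t r s)) = 1"
begin

definition Psi :: "nat \<Rightarrow> nat \<Rightarrow> nat \<Rightarrow> nat \<Rightarrow> complex" where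
  "Psi r1 r2 s1 s2 = (\<Sum>t<n. if r2 = a t \<and> s2 = b t then c t * \<phi> t r1 s1 else 0)"

definition rho :: "nat \<Rightarrow> nat \<Rightarrow> nat \<Rightarrow> nat \<Rightarrow> complex" where
  "rho r1 r2 r1' r2' = (\<Sum>s2<2^M. \<Sum>s1<S. Psi r1 r2 s1 s2 * cnj (Psi r1' r2' s1 s2))"

definition Y :: "nat \<Rightarrow> nat \<Rightarrow> nat \<Rightarrow> nat \<Rightarrow> complex" where
  "Y t t' r1 r1' = (\<Sum>s1<S. \<phi> t r1 s1 * cnj (\<phi> t' r1' s1))"

lemma Psi_prod: "Psi r1 r2 s1 s2 * cnj (Psi r1' r2' s1 s2) =
  (\<Sum>t<n. \<Sum>t'<n. if r2 = a t \<and> s2 = b t \<and> r2' = a t' \<and> s2 = b t' then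
      c t * cnj (c t') * (\<phi> t r1 s1 * cnj (\<phi> t' r1' s1)) else 0)"
  unfolding Psi_def cnj_sum sum_product
  by (intro sum.cong refl) auto

lemma rho_formula: "rho r1 r2 r1' r2' =
  (\<Sum>t<n. \<Sum>t'<n. if r2 = a t \<and> r2' = a t' \<and> b t = b t' then c t * cnj (c t') * Y t t' r1 r1' else 0)"
proof -
  define G where "G t t' s1 s2 = (if r2 = a t \<and> s2 = b t \<and> r2' = a t' \<and> s2 = b t' then
      c t * cnj (c t') * (\<phi> t r1 s1 * cnj (\<phi> t' r1' s1)) else 0)" for t t' s1 s2
  have "rho r1 r2 r1' r2' = (\<Sum>s2<2^M. \<Sum>s1<S. \<Sum>t<n. \<Sum>t'<n. G t t' s1 s2)"
    unfolding rho_def Psi_prod G_def ..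
  also have "\<dots> = (\<Sum>s2<2^M. \<Sum>t<n. \<Sum>t'<n. \<Sum>s1<S. G t t' s1 s2)"
  proof (rule sum.cong[OF refl])
    fix s2
    show "(\<Sum>s1<S. \<Sum>t<n. \<Sum>t'<n. G t t' s1 s2) = (\<Sum>t<n. \<Sum>t'<n. \<Sum>s1<S. G t t' s1 s2)"
      by (subst sum.swap) (rule sum.cong[OF refl], rule sum.swap)
  qed
  also have "\<dots> = (\<Sum>t<n. \<Sum>t'<n. \<Sum>s2<2^M. \<Sum>s1<S. G t t' s1 s2)"
    by (subst sum.swap) (rule sum.cong[OF refl], rule sum.swap)
  also have "\<dots> = (\<Sum>t<n. \<Sum>t'<n. if r2 = a t \<and> r2' = a t' \<and> b t = b t' then c t * cnj (c t') * Y t t' r1 r1' else 0)"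
  proof (intro sum.cong refl)
    fix t t' assume t: "t \<in> {..<n}" and t': "t' \<in> {..<n}"
    show "(\<Sum>s2<2^M. \<Sum>s1<S. G t t' s1 s2) = (if r2 = a t \<and> r2' = a t' \<and> b t = b t' then c t * cnj (c t') * Y t t' r1 r1' else 0)"
    proof (cases "r2 = a t \<and> r2' = a t' \<and> b t = b t'")
      case True
      have "(\<Sum>s2<2^M. \<Sum>s1<S. G t t' s1 s2) = (\<Sum>s1<S. G t t' s1 (b t))"
        by (rule sum_single) (use b_lt t in \<open>auto simp: G_def\<close>)
      also have "\<dots> = c t * cnj (c t') * Y t t' r1 r1'"
        using True unfolding G_def Y_def by (simp add: sum_distrib_left)
      finally show ?thesis using True by simp
    next
      case False
      then have "\<And>s1 s2. G t t' s1 s2 = 0" unfolding G_def by auto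
      then show ?thesis unfolding if_not_P[OF False] by simp
    qed
  qed
  finally show ?thesis .
qed


definition TJ where "TJ = {t. t < n \<and> inJ t}"
definition TK where "TK = {t. t < n \<and> \<not> inJ t}"

lemma finTJ: "finite TJ" and finTK: "finite TK" unfolding TJ_def TK_def by auto

lemma split_n: "(\<Sum>t<n. f t) = (\<Sum>t\<in>TJ. f t) + (\<Sum>t\<in>TK. f t)"
proof -
  have "{..<n} = TJ \<union> TK" unfolding TJ_def TK_def by auto
  moreover have "TJ \<inter> TK = {}" unfolding TJ_def TK_def by auto
  ultimately show ?thesis using finTJ finTK by (simp add: sum.union_disjoint)
qed

lemma sum_if_const: "(\<Sum>t\<in>A. if P then g t else 0) = (if P then (\<Sum>t\<in>A. g t) else 0)"
  by (cases P) auto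

definition rhoK :: "nat \<Rightarrow> nat \<Rightarrow> nat \<Rightarrow> nat \<Rightarrow> complex" where
  "rhoK r1 r2 r1' r2' = (if r2 = 0 \<and> r2' = 0 then (\<Sum>t\<in>TK. c t * cnj (c t) * Y t t r1 r1') else 0)"

definition rhoJ :: "nat \<Rightarrow> nat \<Rightarrow> nat \<Rightarrow> nat \<Rightarrow> complex" where
  "rhoJ r1 r2 r1' r2' = (\<Sum>t\<in>TJ. \<Sum>t'\<in>TJ. if r2 = a t \<and> r2' = a t' then c t * cnj (c t') * Y t t' r1 r1' else 0)"

lemma rho_split: "rho r1 r2 r1' r2' = rhoK r1 r2 r1' r2' + rhoJ r1 r2 r1' r2'"
proof -
  define H where "H t t' = (if r2 = a t \<and> r2' = a t' \<and> b t = b t' then c t * cnj (c t') * Y t t' r1 r1' else 0)" for t t'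
  have "rho r1 r2 r1' r2' = (\<Sum>t<n. \<Sum>t'<n. H t t')" unfolding rho_formula H_def ..
  also have "\<dots> = (\<Sum>t\<in>TJ. (\<Sum>t'\<in>TJ. H t t') + (\<Sum>t'\<in>TK. H t t')) + (\<Sum>t\<in>TK. (\<Sum>t'\<in>TJ. H t t') + (\<Sum>t'\<in>TK. H t t'))"
    by (simp add: split_n)
  also have "(\<Sum>t\<in>TJ. (\<Sum>t'\<in>TJ. H t t') + (\<Sum>t'\<in>TK. H t t')) = rhoJ r1 r2 r1' r2'"
  proof -
    have "\<And>t t'. t \<in> TJ \<Longrightarrow> t' \<in> TK \<Longrightarrow> H t t' = 0"
      unfolding H_def TJ_def TK_def using J1 K1 by force
    moreover have "\<And>t t'. t \<in> TJ \<Longrightarrow> t' \<in> TJ \<Longrightarrow> H t t' = (if r2 = a t \<and> r2' = a t' then c t * cnj (c t') * Y t t' r1 r1' else 0)"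
      unfolding H_def TJ_def using J1 by auto
    ultimately show ?thesis unfolding rhoJ_def by (intro sum.cong) auto
  qed
  also have "(\<Sum>t\<in>TK. (\<Sum>t'\<in>TJ. H t t') + (\<Sum>t'\<in>TK. H t t')) = rhoK r1 r2 r1' r2'"
  proof -
    have "\<And>t t'. t \<in> TK \<Longrightarrow> t' \<in> TJ \<Longrightarrow> H t t' = 0"
      unfolding H_def TJ_def TK_def using J1 K1 by force
    moreover have "\<And>t. t \<in> TK \<Longrightarrow> (\<Sum>t'\<in>TK. H t t') = H t t"
    proof -
      fix t assume t: "t \<in> TK"
      show "(\<Sum>t'\<in>TK. H t t') = H t t"
      proof (rule sum_single[OF finTK t])
        fix t' assume "t' \<in> TK" "t' \<noteq> t"
        then have "b t \<noteq> b t'" using t b_inj unfolding TK_def by force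
        then show "H t t' = 0" unfolding H_def by simp
      qed
    qed
    moreover have "\<And>t. t \<in> TK \<Longrightarrow> H t t = (if r2 = 0 \<and> r2' = 0 then c t * cnj (c t) * Y t t r1 r1' else 0)"
      unfolding H_def TK_def using K1 by auto
    ultimately have "(\<Sum>t\<in>TK. (\<Sum>t'\<in>TJ. H t t') + (\<Sum>t'\<in>TK. H t t')) = (\<Sum>t\<in>TK. if r2 = 0 \<and> r2' = 0 then c t * cnj (c t) * Y t t r1 r1' else 0)"
      by (intro sum.cong) auto
    also have "\<dots> = rhoK r1 r2 r1' r2'" unfolding rhoK_def sum_if_const ..
    finally show ?thesis .
  qed
  finally show ?thesis by simp
qed

lemma rhoJ_zero: "r2 = 0 \<Longrightarrow> rhoJ r1 r2 r1' r2' = 0"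
proof -
  assume r2: "r2 = 0"
  have "\<And>t t'. t \<in> TJ \<Longrightarrow> (if r2 = a t \<and> r2' = a t' then c t * cnj (c t') * Y t t' r1 r1' else 0) = 0"
  proof -
    fix t t' assume "t \<in> TJ"
    then have "a t \<noteq> 0" using J1 unfolding TJ_def by auto
    then show "(if r2 = a t \<and> r2' = a t' then c t * cnj (c t') * Y t t' r1 r1' else 0) = 0" using r2 by simp
  qed
  then show ?thesis unfolding rhoJ_def by simp
qed

lemma rhoK_zero: "r2 \<noteq> 0 \<Longrightarrow> rhoK r1 r2 r1' r2' = 0"
  unfolding rhoK_def by simp

lemma rho_sq: "(cmod (rho r1 r2 r1' r2'))\<^sup>2 = (cmod (rhoK r1 r2 r1' r2'))\<^sup>2 + (cmod (rhoJ r1 r2 r1' r2'))\<^sup>2"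
  unfolding rho_split by (cases "r2 = 0") (simp_all add: rhoJ_zero rhoK_zero)

lemma cc: "t < n \<Longrightarrow> c t * cnj (c t) = complex_of_real (1 / real n)"
  using c_abs[of t] by (simp add: complex_norm_square[symmetric])

lemma Y_bd: "t < n \<Longrightarrow> t' < n \<Longrightarrow> (\<Sum>r1<R. \<Sum>r1'<R. (cmod (Y t t' r1 r1'))\<^sup>2) \<le> Pm"
  unfolding Y_def by (rule frob_cross_bound) (use P_bd in auto)


lemma card_split: "card TJ + card TK = n"
proof -
  have "{..<n} = TJ \<union> TK" unfolding TJ_def TK_def by auto
  moreover have "TJ \<inter> TK = {}" unfolding TJ_def TK_def by auto
  ultimately have "card {..<n} = card TJ + card TK" using finTJ finTK by (simp add: card_Un_disjoint)
  then show ?thesis by simp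
qed

lemma TK_sub: "TK \<subseteq> {..<n}" and TJ_sub: "TJ \<subseteq> {..<n}" unfolding TK_def TJ_def by auto

lemma SK_bound: "(\<Sum>r1<R. \<Sum>r1'<R. \<Sum>r2<2^L. \<Sum>r2'<2^L. (cmod (rhoK r1 r2 r1' r2'))\<^sup>2)
    \<le> real (card TK) * real (card TK) / (real n * real n) * Pm"
proof -
  define K where "K r1 r1' = (\<Sum>t\<in>TK. c t * cnj (c t) * Y t t r1 r1')" for r1 r1'
  have inner: "(\<Sum>r2<2^L. \<Sum>r2'<2^L. (cmod (rhoK r1 r2 r1' r2'))\<^sup>2) = (cmod (K r1 r1'))\<^sup>2" for r1 r1'
  proof -
    have "(\<Sum>r2<2^L. \<Sum>r2'<2^L. (cmod (rhoK r1 r2 r1' r2'))\<^sup>2) = (\<Sum>r2<2^L. (cmod (rhoK r1 r2 r1' 0))\<^sup>2)"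
      by (intro sum.cong refl sum_single) (auto simp: rhoK_def)
    also have "\<dots> = (cmod (rhoK r1 0 r1' 0))\<^sup>2"
      by (intro sum_single) (auto simp: rhoK_def)
    also have "\<dots> = (cmod (K r1 r1'))\<^sup>2" unfolding rhoK_def K_def by simp
    finally show ?thesis .
  qed
  have Kb: "(cmod (K r1 r1'))\<^sup>2 \<le> real (card TK) * (\<Sum>t\<in>TK. 1 / (real n * real n) * (cmod (Y t t r1 r1'))\<^sup>2)" for r1 r1'
  proof -
    have "(cmod (K r1 r1'))\<^sup>2 \<le> real (card TK) * (\<Sum>t\<in>TK. (cmod (c t * cnj (c t) * Y t t r1 r1'))\<^sup>2)"
      unfolding K_def by (rule complex_cs_card[OF finTK])
    also have "(\<Sum>t\<in>TK. (cmod (c t * cnj (c t) * Y t t r1 r1'))\<^sup>2) = (\<Sum>t\<in>TK. 1 / (real n * real n) * (cmod (Y t t r1 r1'))\<^sup>2)"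
    proof (rule sum.cong[OF refl])
      fix t assume "t \<in> TK"
      then have t: "t < n" using TK_sub by auto
      have "(cmod (c t * cnj (c t) * Y t t r1 r1'))\<^sup>2 = ((cmod (c t))\<^sup>2)\<^sup>2 * (cmod (Y t t r1 r1'))\<^sup>2"
        by (simp add: norm_mult power_mult_distrib power2_eq_square)
      also have "\<dots> = 1 / (real n * real n) * (cmod (Y t t r1 r1'))\<^sup>2" using c_abs[OF t] by (simp add: power2_eq_square)
      finally show "(cmod (c t * cnj (c t) * Y t t r1 r1'))\<^sup>2 = 1 / (real n * real n) * (cmod (Y t t r1 r1'))\<^sup>2" .
    qed
    finally show ?thesis .
  qed
  have "(\<Sum>r1<R. \<Sum>r1'<R. \<Sum>r2<2^L. \<Sum>r2'<2^L. (cmod (rhoK r1 r2 r1' r2'))\<^sup>2) = (\<Sum>r1<R. \<Sum>r1'<R. (cmod (K r1 r1'))\<^sup>2)"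
    by (simp add: inner)
  also have "\<dots> \<le> (\<Sum>r1<R. \<Sum>r1'<R. real (card TK) * (\<Sum>t\<in>TK. 1 / (real n * real n) * (cmod (Y t t r1 r1'))\<^sup>2))"
    by (intro sum_mono Kb)
  also have "\<dots> = real (card TK) / (real n * real n) * (\<Sum>r1<R. \<Sum>r1'<R. \<Sum>t\<in>TK. (cmod (Y t t r1 r1'))\<^sup>2)"
    by (simp add: sum_distrib_left mult_ac)
  also have "\<dots> = real (card TK) / (real n * real n) * (\<Sum>t\<in>TK. \<Sum>r1<R. \<Sum>r1'<R. (cmod (Y t t r1 r1'))\<^sup>2)"
  proof -
    have "(\<Sum>r1<R. \<Sum>r1'<R. \<Sum>t\<in>TK. (cmod (Y t t r1 r1'))\<^sup>2) = (\<Sum>t\<in>TK. \<Sum>r1<R. \<Sum>r1'<R. (cmod (Y t t r1 r1'))\<^sup>2)"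
      by (subst sum.swap) (rule sum.cong[OF refl], rule sum.swap)
    then show ?thesis by simp
  qed
  also have "\<dots> \<le> real (card TK) / (real n * real n) * (\<Sum>t\<in>TK. Pm)"
    by (intro mult_left_mono sum_mono Y_bd) (use TK_sub in auto)
  also have "\<dots> = real (card TK) * real (card TK) / (real n * real n) * Pm" by simp
  finally show ?thesis .
qed

lemma SJ_bound: "(\<Sum>r1<R. \<Sum>r1'<R. \<Sum>r2<2^L. \<Sum>r2'<2^L. (cmod (rhoJ r1 r2 r1' r2'))\<^sup>2)
    \<le> real (card TJ) * real (card TJ) / (real n * real n) * Pm"
proof -
  have ainj: "inj_on a TJ" using a_inj unfolding TJ_def inj_on_def by auto
  have arng: "a ` TJ \<subseteq> {..<2^L}" using a_lt unfolding TJ_def by auto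
  define z where "z r1 r1' t t' = c t * cnj (c t') * Y t t' r1 r1'" for r1 r1' t t'
  define W where "W r1 r1' r2' t = (\<Sum>t'\<in>TJ. if r2' = a t' then z r1 r1' t t' else 0)" for r1 r1' r2' t
  have rJ: "rhoJ r1 r2 r1' r2' = (\<Sum>t\<in>TJ. if r2 = a t then W r1 r1' r2' t else 0)" for r1 r2 r1' r2'
    unfolding rhoJ_def W_def z_def
    by (intro sum.cong refl) (simp add: sum_if_const[symmetric] if_if_eq_conj)
  have inner: "(\<Sum>r2<2^L. \<Sum>r2'<2^L. (cmod (rhoJ r1 r2 r1' r2'))\<^sup>2) = (\<Sum>t\<in>TJ. \<Sum>t'\<in>TJ. (cmod (z r1 r1' t t'))\<^sup>2)" for r1 r1'
  proof -
    have "(\<Sum>r2<2^L. \<Sum>r2'<2^L. (cmod (rhoJ r1 r2 r1' r2'))\<^sup>2) = (\<Sum>r2'<2^L. \<Sum>r2<2^L. (cmod (rhoJ r1 r2 r1' r2'))\<^sup>2)"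
      by (rule sum.swap)
    also have "\<dots> = (\<Sum>r2'<2^L. \<Sum>t\<in>TJ. (cmod (W r1 r1' r2' t))\<^sup>2)"
      unfolding rJ by (intro sum.cong refl inj_sum_sq finTJ ainj arng)
    also have "\<dots> = (\<Sum>t\<in>TJ. \<Sum>r2'<2^L. (cmod (W r1 r1' r2' t))\<^sup>2)"
      by (rule sum.swap)
    also have "\<dots> = (\<Sum>t\<in>TJ. \<Sum>t'\<in>TJ. (cmod (z r1 r1' t t'))\<^sup>2)"
      unfolding W_def by (intro sum.cong refl inj_sum_sq finTJ ainj arng)
    finally show ?thesis .
  qed
  have zsq: "t \<in> TJ \<Longrightarrow> t' \<in> TJ \<Longrightarrow> (cmod (z r1 r1' t t'))\<^sup>2 = 1 / (real n * real n) * (cmod (Y t t' r1 r1'))\<^sup>2" for t t' r1 r1'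
  proof -
    assume "t \<in> TJ" "t' \<in> TJ"
    then have t: "t < n" and t': "t' < n" using TJ_sub by auto
    have "(cmod (z r1 r1' t t'))\<^sup>2 = (cmod (c t))\<^sup>2 * (cmod (c t'))\<^sup>2 * (cmod (Y t t' r1 r1'))\<^sup>2"
      unfolding z_def by (simp add: norm_mult power_mult_distrib)
    also have "\<dots> = 1 / (real n * real n) * (cmod (Y t t' r1 r1'))\<^sup>2" using c_abs[OF t] c_abs[OF t'] by simp
    finally show ?thesis .
  qed
  have "(\<Sum>r1<R. \<Sum>r1'<R. \<Sum>r2<2^L. \<Sum>r2'<2^L. (cmod (rhoJ r1 r2 r1' r2'))\<^sup>2)
      = (\<Sum>r1<R. \<Sum>r1'<R. \<Sum>t\<in>TJ. \<Sum>t'\<in>TJ. 1 / (real n * real n) * (cmod (Y t t' r1 r1'))\<^sup>2)"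
    unfolding inner by (intro sum.cong refl zsq) auto
  also have "\<dots> = (\<Sum>t\<in>TJ. \<Sum>t'\<in>TJ. \<Sum>r1<R. \<Sum>r1'<R. 1 / (real n * real n) * (cmod (Y t t' r1 r1'))\<^sup>2)"
  proof -
    have "(\<Sum>r1<R. \<Sum>r1'<R. \<Sum>t\<in>TJ. \<Sum>t'\<in>TJ. 1 / (real n * real n) * (cmod (Y t t' r1 r1'))\<^sup>2)
        = (\<Sum>r1<R. \<Sum>t\<in>TJ. \<Sum>t'\<in>TJ. \<Sum>r1'<R. 1 / (real n * real n) * (cmod (Y t t' r1 r1'))\<^sup>2)"
    proof (rule sum.cong[OF refl])
      fix r1
      show "(\<Sum>r1'<R. \<Sum>t\<in>TJ. \<Sum>t'\<in>TJ. 1 / (real n * real n) * (cmod (Y t t' r1 r1'))\<^sup>2)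
        = (\<Sum>t\<in>TJ. \<Sum>t'\<in>TJ. \<Sum>r1'<R. 1 / (real n * real n) * (cmod (Y t t' r1 r1'))\<^sup>2)"
        by (subst sum.swap) (rule sum.cong[OF refl], rule sum.swap)
    qed
    also have "\<dots> = (\<Sum>t\<in>TJ. \<Sum>t'\<in>TJ. \<Sum>r1<R. \<Sum>r1'<R. 1 / (real n * real n) * (cmod (Y t t' r1 r1'))\<^sup>2)"
      by (subst sum.swap) (rule sum.cong[OF refl], rule sum.swap)
    finally show ?thesis .
  qed
  also have "\<dots> = (\<Sum>t\<in>TJ. \<Sum>t'\<in>TJ. 1 / (real n * real n) * (\<Sum>r1<R. \<Sum>r1'<R. (cmod (Y t t' r1 r1'))\<^sup>2))"
    by (simp add: sum_distrib_left)
  also have "\<dots> \<le> (\<Sum>t\<in>TJ. \<Sum>t'\<in>TJ. 1 / (real n * real n) * Pm)"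
    by (intro sum_mono mult_left_mono Y_bd) (use TJ_sub in auto)
  also have "\<dots> = real (card TJ) * real (card TJ) / (real n * real n) * Pm" by simp
  finally show ?thesis .
qed

lemma trace_one:
  assumes n0: "n > 0"
  shows "(\<Sum>r2<2^L. \<Sum>r1<R. rho r1 r2 r1 r2) = 1"
proof -
  have ainj: "inj_on a TJ" using a_inj unfolding TJ_def inj_on_def by auto
  have arng: "a ` TJ \<subseteq> {..<2^L}" using a_lt unfolding TJ_def by auto
  have trY: "t < n \<Longrightarrow> (\<Sum>r1<R. Y t t r1 r1) = 1" for t
    unfolding Y_def using tr1 by simp
  have K: "(\<Sum>r2<2^L. \<Sum>r1<R. rhoK r1 r2 r1 r2) = real (card TK) / real n"
  proof -
    have "(\<Sum>r2<2^L. \<Sum>r1<R. rhoK r1 r2 r1 r2) = (\<Sum>r1<R. rhoK r1 0 r1 0)"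
      by (intro sum_single) (auto simp: rhoK_def)
    also have "\<dots> = (\<Sum>r1<R. \<Sum>t\<in>TK. complex_of_real (1 / real n) * Y t t r1 r1)"
    proof (rule sum.cong[OF refl])
      fix r1
      have "rhoK r1 0 r1 0 = (\<Sum>t\<in>TK. c t * cnj (c t) * Y t t r1 r1)" unfolding rhoK_def by simp
      also have "\<dots> = (\<Sum>t\<in>TK. complex_of_real (1 / real n) * Y t t r1 r1)"
        by (rule sum.cong[OF refl]) (use TK_sub cc in auto)
      finally show "rhoK r1 0 r1 0 = (\<Sum>t\<in>TK. complex_of_real (1 / real n) * Y t t r1 r1)" .
    qed
    also have "\<dots> = (\<Sum>t\<in>TK. complex_of_real (1 / real n) * (\<Sum>r1<R. Y t t r1 r1))"
      by (subst sum.swap) (simp add: sum_distrib_left)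
    also have "\<dots> = (\<Sum>t\<in>TK. complex_of_real (1 / real n))"
      using TK_sub trY by (intro sum.cong refl) auto
    also have "\<dots> = real (card TK) / real n" by simp
    finally show ?thesis .
  qed
  have J: "(\<Sum>r2<2^L. \<Sum>r1<R. rhoJ r1 r2 r1 r2) = real (card TJ) / real n"
  proof -
    have "(\<Sum>r2<2^L. \<Sum>r1<R. rhoJ r1 r2 r1 r2) = (\<Sum>r1<R. \<Sum>t\<in>TJ. \<Sum>t'\<in>TJ. \<Sum>r2<2^L. if r2 = a t \<and> r2 = a t' then c t * cnj (c t') * Y t t' r1 r1 else 0)"
    proof -
      have "(\<Sum>r2<2^L. \<Sum>r1<R. rhoJ r1 r2 r1 r2) = (\<Sum>r1<R. \<Sum>r2<2^L. rhoJ r1 r2 r1 r2)" by (rule sum.swap)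
      also have "\<dots> = (\<Sum>r1<R. \<Sum>r2<2^L. \<Sum>t\<in>TJ. \<Sum>t'\<in>TJ. if r2 = a t \<and> r2 = a t' then c t * cnj (c t') * Y t t' r1 r1 else 0)"
        unfolding rhoJ_def ..
      also have "\<dots> = (\<Sum>r1<R. \<Sum>t\<in>TJ. \<Sum>t'\<in>TJ. \<Sum>r2<2^L. if r2 = a t \<and> r2 = a t' then c t * cnj (c t') * Y t t' r1 r1 else 0)"
        by (rule sum.cong[OF refl], subst sum.swap, rule sum.cong[OF refl], rule sum.swap)
      finally show ?thesis .
    qed
    also have "\<dots> = (\<Sum>r1<R. \<Sum>t\<in>TJ. \<Sum>t'\<in>TJ. if t' = t then c t * cnj (c t') * Y t t' r1 r1 else 0)"
    proof (intro sum.cong refl)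
      fix r1 t t' assume t: "t \<in> TJ" and t': "t' \<in> TJ"
      show "(\<Sum>r2<2^L. if r2 = a t \<and> r2 = a t' then c t * cnj (c t') * Y t t' r1 r1 else 0)
          = (if t' = t then c t * cnj (c t') * Y t t' r1 r1 else 0)"
      proof (cases "t' = t")
        case True
        then show ?thesis using arng t by (subst sum_single[of _ "a t"]) auto
      next
        case False
        then have "a t \<noteq> a t'" using ainj t t' unfolding inj_on_def by auto
        then show ?thesis using False by (auto intro!: sum.neutral)
      qed
    qed
    also have "\<dots> = (\<Sum>r1<R. \<Sum>t\<in>TJ. complex_of_real (1 / real n) * Y t t r1 r1)"
    proof (rule sum.cong[OF refl])+
      fix r1 t assume "t \<in> TJ"
      then have "(\<Sum>t'\<in>TJ. if t' = t then c t * cnj (c t') * Y t t' r1 r1 else 0) = c t * cnj (c t) * Y t t r1 r1"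
        by (simp add: finTJ)
      also have "\<dots> = complex_of_real (1 / real n) * Y t t r1 r1" using \<open>t \<in> TJ\<close> TJ_sub cc by auto
      finally show "(\<Sum>t'\<in>TJ. if t' = t then c t * cnj (c t') * Y t t' r1 r1 else 0) = complex_of_real (1 / real n) * Y t t r1 r1" .
    qed
    also have "\<dots> = (\<Sum>t\<in>TJ. complex_of_real (1 / real n) * (\<Sum>r1<R. Y t t r1 r1))"
      by (subst sum.swap) (simp add: sum_distrib_left)
    also have "\<dots> = (\<Sum>t\<in>TJ. complex_of_real (1 / real n))"
      using TJ_sub trY by (intro sum.cong refl) auto
    also have "\<dots> = real (card TJ) / real n" by simp
    finally show ?thesis .
  qed
  have "(\<Sum>r2<2^L. \<Sum>r1<R. rho r1 r2 r1 r2) = (\<Sum>r2<2^L. \<Sum>r1<R. rhoK r1 r2 r1 r2) + (\<Sum>r2<2^L. \<Sum>r1<R. rhoJ r1 r2 r1 r2)"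
    unfolding rho_split by (simp add: sum.distrib)
  also have "\<dots> = (real (card TK) + real (card TJ)) / real n" unfolding K J by (simp add: add_divide_distrib)
  also have "\<dots> = 1"
  proof -
    have "complex_of_nat (card TJ) + complex_of_nat (card TK) = complex_of_nat n"
      using card_split by (metis of_nat_add)
    then show ?thesis using n0 by (simp add: add.commute)
  qed
  finally show ?thesis .
qed

end


context bipart
begin

definition Xop :: "(nat \<Rightarrow> nat \<Rightarrow> complex) \<Rightarrow> complex mat" where
  "Xop D = mat (2^N) (2^N) (\<lambda>(i,j). if proj ys i = proj ys j then D (proj xs i) (proj xs j) else 0)"

lemma Xop_carrier: "Xop D \<in> carrier_mat (2^N) (2^N)" unfolding Xop_def by simp

lemma Xop_emb: fixes D :: "nat \<Rightarrow> nat \<Rightarrow> complex" shows "r < 2^length xs \<Longrightarrow> s < 2^length ys \<Longrightarrow> r' < 2^length xs \<Longrightarrow> s' < 2^length ys \<Longrightarrow>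
   Xop D $$ (emb2 r s, emb2 r' s') = (if s = s' then D r r' else 0)"
  unfolding Xop_def using emb2_less by (simp add: proj_emb2_1 proj_emb2_2)

lemma mv_sum: "A \<in> carrier_mat (2^N) (2^N) \<Longrightarrow> dim_vec w = 2^N \<Longrightarrow> i < 2^N \<Longrightarrow>
   (A *\<^sub>v w) $ i = (\<Sum>j<2^N. A $$ (i,j) * w $ j)"
  by (simp add: scalar_prod_def atLeast0LessThan row_def)

lemma Xop_mv: fixes D :: "nat \<Rightarrow> nat \<Rightarrow> complex" assumes w: "dim_vec w = 2^N" and r: "r < 2^length xs" and s: "s < 2^length ys"
  shows "(Xop D *\<^sub>v w) $ (emb2 r s) = (\<Sum>r'<2^length xs. D r r' * w $ (emb2 r' s))"
proof -
  have "(Xop D *\<^sub>v w) $ (emb2 r s) = (\<Sum>j<2^N. Xop D $$ (emb2 r s, j) * w $ j)"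
    by (rule mv_sum[OF Xop_carrier w emb2_less])
  also have "\<dots> = (\<Sum>r'<2^length xs. \<Sum>s'<2^length ys. Xop D $$ (emb2 r s, emb2 r' s') * w $ (emb2 r' s'))"
    by (rule sum_split)
  also have "\<dots> = (\<Sum>r'<2^length xs. D r r' * w $ (emb2 r' s))"
  proof (rule sum.cong[OF refl])
    fix r' :: nat assume r': "r' \<in> {..<2^length xs}"
    have "(\<Sum>s'<2^length ys. Xop D $$ (emb2 r s, emb2 r' s') * w $ (emb2 r' s'))
        = Xop D $$ (emb2 r s, emb2 r' s) * w $ (emb2 r' s)"
      by (rule sum_single) (use r s r' in \<open>auto simp: Xop_emb\<close>)
    also have "\<dots> = D r r' * w $ (emb2 r' s)" using r s r' by (simp add: Xop_emb)
    finally show "(\<Sum>s'<2^length ys. Xop D $$ (emb2 r s, emb2 r' s') * w $ (emb2 r' s')) = D r r' * w $ (emb2 r' s)" .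
  qed
  finally show ?thesis .
qed

lemma Xop_trace: fixes D :: "nat \<Rightarrow> nat \<Rightarrow> complex" shows "mtrace (Xop D) = of_nat (2^length ys) * (\<Sum>r<2^length xs. D r r)"
proof -
  have "mtrace (Xop D) = (\<Sum>i<2^N. Xop D $$ (i,i))" unfolding mtrace_def Xop_def by simp
  also have "\<dots> = (\<Sum>r<2^length xs. \<Sum>s<2^length ys. Xop D $$ (emb2 r s, emb2 r s))" by (rule sum_split)
  also have "\<dots> = (\<Sum>r<2^length xs. \<Sum>(s::nat)<2^length ys. D r r)"
    by (intro sum.cong refl) (simp add: Xop_emb)
  also have "\<dots> = of_nat (2^length ys) * (\<Sum>r<2^length xs. D r r)" by (simp add: sum_distrib_left)
  finally show ?thesis .
qed

lemma proj_eq_bits: fixes i j :: nat shows "(\<And>k. k < length zs \<Longrightarrow> bit i (zs!k) = bit j (zs!k)) \<Longrightarrow> proj zs i = proj zs j"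
  unfolding proj_def by (rule arg_cong[where f = spow]) auto

lemma Xop_supported: fixes D :: "nat \<Rightarrow> nat \<Rightarrow> complex" shows "supported_on N (set xs) (Xop D)"
  unfolding supported_on_def
proof (intro conjI allI impI)
  show "Xop D \<in> carrier_mat (2^N) (2^N)" by (rule Xop_carrier)
next
  fix i j :: nat assume i: "i < 2^N" and j: "j < 2^N" and ex: "\<exists>q<N. q \<notin> set xs \<and> bit i q \<noteq> bit j q"
  then obtain q where q: "q < N" "q \<notin> set xs" "bit i q \<noteq> bit j q" by auto
  then have "q \<in> set ys" using cover by auto
  then obtain k where k: "k < length ys" "ys ! k = q" by (auto simp: in_set_conv_nth)
  have "bit (proj ys i) k \<noteq> bit (proj ys j) k" using k q by (simp add: bit_proj)
  then have "proj ys i \<noteq> proj ys j" by auto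
  then show "Xop D $$ (i, j) = 0" unfolding Xop_def using i j by simp
next
  fix i j i' j' :: nat
  assume i: "i < 2^N" and j: "j < 2^N" and i': "i' < 2^N" and j': "j' < 2^N"
    and h1: "\<forall>q<N. q \<notin> set xs \<longrightarrow> bit i q = bit j q"
    and h2: "\<forall>q<N. q \<notin> set xs \<longrightarrow> bit i' q = bit j' q"
    and h3: "\<forall>q\<in>set xs. bit i q = bit i' q \<and> bit j q = bit j' q"
  have ysprop: "\<And>k. k < length ys \<Longrightarrow> ys!k < N \<and> ys!k \<notin> set xs"
    using cover disj by (metis UnI2 disjoint_iff lessThan_iff nth_mem)
  have e1: "proj ys i = proj ys j" by (rule proj_eq_bits) (use h1 ysprop in auto)
  have e2: "proj ys i' = proj ys j'" by (rule proj_eq_bits) (use h2 ysprop in auto)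
  have e3: "proj xs i = proj xs i'" by (rule proj_eq_bits) (use h3 in auto)
  have e4: "proj xs j = proj xs j'" by (rule proj_eq_bits) (use h3 in auto)
  show "Xop D $$ (i, j) = Xop D $$ (i', j')" unfolding Xop_def using i j i' j' e1 e2 e3 e4 by simp
qed

lemma sq_emb: "dim_vec w = 2^N \<Longrightarrow> (\<Sum>i<dim_vec w. (cmod (w $ i))\<^sup>2) =
    (\<Sum>r<2^length xs. \<Sum>s<2^length ys. (cmod (w $ emb2 r s))\<^sup>2)"
  by (simp add: sum_split)

lemma Xop_opnorm:
  fixes D :: "nat \<Rightarrow> nat \<Rightarrow> complex"
  assumes D1: "(\<Sum>r<2^length xs. \<Sum>r'<2^length xs. (cmod (D r r'))\<^sup>2) = 1"
  shows "opnorm_le1 (Xop D)"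
  unfolding opnorm_le1_def
proof (intro allI impI)
  fix w :: "complex vec" assume "dim_vec w = dim_col (Xop D)"
  then have w: "dim_vec w = 2^N" unfolding Xop_def by simp
  let ?R = "2^length xs" and ?S = "2^length ys"
  have dimXw: "dim_vec (Xop D *\<^sub>v w) = 2^N" unfolding Xop_def by simp
  have "(\<Sum>i<dim_vec (Xop D *\<^sub>v w). (cmod ((Xop D *\<^sub>v w) $ i))\<^sup>2)
      = (\<Sum>r<?R. \<Sum>s<?S. (cmod ((Xop D *\<^sub>v w) $ emb2 r s))\<^sup>2)" by (rule sq_emb[OF dimXw])
  also have "\<dots> = (\<Sum>r<?R. \<Sum>s<?S. (cmod (\<Sum>r'<?R. D r r' * w $ (emb2 r' s)))\<^sup>2)"
    by (intro sum.cong refl) (simp add: Xop_mv[OF w])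
  also have "\<dots> \<le> (\<Sum>r<?R. \<Sum>s<?S. (\<Sum>r'<?R. (cmod (D r r'))\<^sup>2) * (\<Sum>r'<?R. (cmod (w $ (emb2 r' s)))\<^sup>2))"
    by (intro sum_mono complex_cs) auto
  also have "\<dots> = (\<Sum>r<?R. \<Sum>r'<?R. (cmod (D r r'))\<^sup>2) * (\<Sum>s<?S. \<Sum>r'<?R. (cmod (w $ (emb2 r' s)))\<^sup>2)"
    unfolding sum_product ..
  also have "\<dots> = (\<Sum>r'<?R. \<Sum>s<?S. (cmod (w $ (emb2 r' s)))\<^sup>2)" unfolding D1 by (simp, rule sum.swap)
  also have "\<dots> = (\<Sum>i<dim_vec w. (cmod (w $ i))\<^sup>2)" by (rule sq_emb[OF w, symmetric])
  finally show "cvnorm (Xop D *\<^sub>v w) \<le> cvnorm w" unfolding cvnorm_def by (rule real_sqrt_le_mono)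
qed

end


lemma cmod_plus_real_sq: "(cmod (z + complex_of_real a))\<^sup>2 = (cmod z)\<^sup>2 + 2 * a * Re z + a\<^sup>2"
  unfolding cmod_power2 by (simp add: power2_eq_square algebra_simps)

context bipart
begin

lemma eth_purity:
  fixes \<psi> :: "complex vec" and \<epsilon> :: real
  assumes dim: "dim_vec \<psi> = 2^N"
    and nrm: "(\<Sum>i<2^N. (cmod (\<psi>$i))\<^sup>2) = 1"
    and ETH: "\<And>X. supported_on N (set xs) X \<Longrightarrow> opnorm_le1 X \<Longrightarrow> cmod (cinner \<psi> (X *\<^sub>v \<psi>) - mtrace X / 2^N) \<le> \<epsilon>"
  shows "(\<Sum>r<2^length xs. \<Sum>r'<2^length xs. (cmod (\<Sum>s<2^length ys. \<psi> $ emb2 r s * cnj (\<psi> $ emb2 r' s)))\<^sup>2) \<le> 1 / 2^length xs + \<epsilon>\<^sup>2"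
proof -
  define R :: nat where "R = 2^length xs"
  define Sd :: nat where "Sd = 2^length ys"
  have Rpos: "R > 0" unfolding R_def by simp
  define Xm where "Xm r r' = (\<Sum>s<Sd. \<psi> $ emb2 r s * cnj (\<psi> $ emb2 r' s))" for r r'
  define \<Delta> where "\<Delta> r r' = Xm r r' - (if r = r' then complex_of_real (1 / real R) else 0)" for r r'
  define F where "F = (\<Sum>r<R. \<Sum>r'<R. (cmod (\<Delta> r r'))\<^sup>2)"
  have F0: "F \<ge> 0" unfolding F_def by (intro sum_nonneg) auto
  have tr: "(\<Sum>r<R. Xm r r) = 1"
  proof -
    have "(\<Sum>r<R. Xm r r) = (\<Sum>r<R. \<Sum>s<Sd. complex_of_real ((cmod (\<psi> $ emb2 r s))\<^sup>2))"
      unfolding Xm_def complex_norm_square ..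
    also have "\<dots> = complex_of_real (\<Sum>i<2^N. (cmod (\<psi>$i))\<^sup>2)"
      unfolding R_def Sd_def of_real_sum sum_split ..
    also have "\<dots> = 1" using nrm by simp
    finally show ?thesis .
  qed
  have trD: "(\<Sum>r<R. \<Delta> r r) = 0"
  proof -
    have "(\<Sum>r<R. \<Delta> r r) = (\<Sum>r<R. Xm r r) - (\<Sum>r<R. complex_of_real (1 / real R))"
      unfolding \<Delta>_def by (simp add: sum_subtractf)
    also have "\<dots> = 0" using tr Rpos by simp
    finally show ?thesis .
  qed
  have hermX: "Xm r' r = cnj (Xm r r')" for r r'
    unfolding Xm_def by (simp add: mult.commute)
  have hermD: "\<Delta> r' r = cnj (\<Delta> r r')" for r r'
    unfolding \<Delta>_def by (simp add: hermX[of r r'] eq_commute[of r' r])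
  have eqXm: "(\<Sum>r<R. \<Sum>r'<R. (cmod (Xm r r'))\<^sup>2) = F + 1 / real R"
  proof -
    have ent: "(cmod (Xm r r'))\<^sup>2 = (cmod (\<Delta> r r'))\<^sup>2 + (if r = r' then 2 * (1 / real R) * Re (\<Delta> r r) + (1 / real R)\<^sup>2 else 0)" for r r'
    proof (cases "r = r'")
      case True
      have "Xm r r' = \<Delta> r r' + complex_of_real (1 / real R)" unfolding \<Delta>_def using True by simp
      then show ?thesis using True by (simp only: cmod_plus_real_sq) simp
    next
      case False
      then show ?thesis unfolding \<Delta>_def by simp
    qed
    have "(\<Sum>r<R. \<Sum>r'<R. (cmod (Xm r r'))\<^sup>2) = F + (\<Sum>r<R. \<Sum>r'<R. if r = r' then 2 * (1 / real R) * Re (\<Delta> r r) + (1 / real R)\<^sup>2 else 0)"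
      unfolding ent F_def by (simp add: sum.distrib)
    also have "(\<Sum>r<R. \<Sum>r'<R. if r = r' then 2 * (1 / real R) * Re (\<Delta> r r) + (1 / real R)\<^sup>2 else 0)
        = (\<Sum>r<R. 2 * (1 / real R) * Re (\<Delta> r r) + (1 / real R)\<^sup>2)"
      by (intro sum.cong refl) (simp add: sum.delta)
    also have "\<dots> = 2 * (1 / real R) * Re (\<Sum>r<R. \<Delta> r r) + real R * (1 / real R)\<^sup>2"
      by (simp add: sum.distrib sum_distrib_left)
    also have "\<dots> = 1 / real R" using trD Rpos by (simp add: power2_eq_square)
    finally show ?thesis .
  qed
  have Fb: "F \<le> \<epsilon>\<^sup>2"
  proof (cases "F = 0")
    case True then show ?thesis by simp
  next
    case False
    then have Fpos: "F > 0" using F0 by simp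
    define sF where "sF = sqrt F"
    have sFpos: "sF > 0" unfolding sF_def using Fpos by simp
    define D where "D r r' = \<Delta> r r' / complex_of_real sF" for r r'
    have D1: "(\<Sum>r<R. \<Sum>r'<R. (cmod (D r r'))\<^sup>2) = 1"
    proof -
      have "(\<Sum>r<R. \<Sum>r'<R. (cmod (D r r'))\<^sup>2) = (\<Sum>r<R. \<Sum>r'<R. (cmod (\<Delta> r r'))\<^sup>2 / F)"
        unfolding D_def using sFpos Fpos
        by (intro sum.cong refl) (simp add: norm_divide power_divide sF_def)
      also have "\<dots> = (\<Sum>r<R. \<Sum>r'<R. (cmod (\<Delta> r r'))\<^sup>2) / F" by (simp only: sum_divide_distrib)
      also have "\<dots> = 1" using Fpos unfolding F_def[symmetric] by simp
      finally show ?thesis .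
    qed
    have cin: "cinner \<psi> (Xop D *\<^sub>v \<psi>) = complex_of_real sF"
    proof -
      have "cinner \<psi> (Xop D *\<^sub>v \<psi>) = (\<Sum>i<2^N. cnj (\<psi> $ i) * (Xop D *\<^sub>v \<psi>) $ i)"
        unfolding cinner_def dim ..
      also have "\<dots> = (\<Sum>r<R. \<Sum>s<Sd. cnj (\<psi> $ emb2 r s) * (Xop D *\<^sub>v \<psi>) $ emb2 r s)"
        unfolding R_def Sd_def by (rule sum_split)
      also have "\<dots> = (\<Sum>r<R. \<Sum>s<Sd. cnj (\<psi> $ emb2 r s) * (\<Sum>r'<R. D r r' * \<psi> $ (emb2 r' s)))"
        unfolding R_def Sd_def by (intro sum.cong refl) (simp add: Xop_mv[OF dim])
      also have "\<dots> = (\<Sum>r<R. \<Sum>s<Sd. \<Sum>r'<R. D r r' * (\<psi> $ (emb2 r' s) * cnj (\<psi> $ emb2 r s)))"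
        by (simp add: sum_distrib_left mult_ac)
      also have "\<dots> = (\<Sum>r<R. \<Sum>r'<R. \<Sum>s<Sd. D r r' * (\<psi> $ (emb2 r' s) * cnj (\<psi> $ emb2 r s)))"
        by (rule sum.cong[OF refl], rule sum.swap)
      also have "\<dots> = (\<Sum>r<R. \<Sum>r'<R. D r r' * Xm r' r)"
        unfolding Xm_def by (simp add: sum_distrib_left)
      also have "\<dots> = (\<Sum>r<R. \<Sum>r'<R. (\<Delta> r r' * cnj (\<Delta> r r')) / complex_of_real sF + (if r = r' then \<Delta> r r / complex_of_real sF * complex_of_real (1 / real R) else 0))"
      proof (intro sum.cong refl)
        fix r r'
        have "Xm r' r = cnj (\<Delta> r r') + (if r = r' then complex_of_real (1 / real R) else 0)"
          using hermD[of r r'] unfolding \<Delta>_def by auto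
        then show "D r r' * Xm r' r = (\<Delta> r r' * cnj (\<Delta> r r')) / complex_of_real sF + (if r = r' then \<Delta> r r / complex_of_real sF * complex_of_real (1 / real R) else 0)"
          unfolding D_def by (cases "r = r'") (simp_all add: distrib_left)
      qed
      also have "\<dots> = complex_of_real sF"
      proof -
        have e1: "(\<Sum>r<R. \<Sum>r'<R. (if r = r' then \<Delta> r r / complex_of_real sF * complex_of_real (1 / real R) else 0)) = 0"
        proof -
          have "(\<Sum>r<R. \<Sum>r'<R. (if r = r' then \<Delta> r r / complex_of_real sF * complex_of_real (1 / real R) else 0))
              = (\<Sum>r<R. \<Delta> r r / complex_of_real sF * complex_of_real (1 / real R))"
            by (intro sum.cong refl) (simp add: sum.delta)
          also have "\<dots> = (\<Sum>r<R. \<Delta> r r) / complex_of_real sF * complex_of_real (1 / real R)"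
            by (simp only: sum_distrib_right sum_divide_distrib)
          also have "\<dots> = 0" unfolding trD by simp
          finally show ?thesis .
        qed
        have e2: "(\<Sum>r<R. \<Sum>r'<R. (\<Delta> r r' * cnj (\<Delta> r r')) / complex_of_real sF) = complex_of_real (F / sF)"
        proof -
          have "(\<Sum>r<R. \<Sum>r'<R. (\<Delta> r r' * cnj (\<Delta> r r')) / complex_of_real sF)
              = (\<Sum>r<R. \<Sum>r'<R. complex_of_real ((cmod (\<Delta> r r'))\<^sup>2)) / complex_of_real sF"
            unfolding complex_norm_square by (simp only: sum_divide_distrib)
          also have "\<dots> = complex_of_real F / complex_of_real sF" unfolding F_def of_real_sum ..
          finally show ?thesis by simp
        qed
        have e3: "F / sF = sF" unfolding sF_def using Fpos by (simp add: real_div_sqrt)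
        show ?thesis by (simp only: sum.distrib e1 e2 e3) simp
      qed
      finally show ?thesis .
    qed
    have mtr: "mtrace (Xop D) = 0"
    proof -
      have "(\<Sum>r<R. D r r) = (\<Sum>r<R. \<Delta> r r) / complex_of_real sF" unfolding D_def by (simp add: sum_divide_distrib)
      then have "(\<Sum>r<R. D r r) = 0" using trD by simp
      then show ?thesis unfolding Xop_trace R_def by simp
    qed
    have "cmod (cinner \<psi> (Xop D *\<^sub>v \<psi>) - mtrace (Xop D) / 2^N) \<le> \<epsilon>"
      by (rule ETH[OF Xop_supported Xop_opnorm]) (use D1 in \<open>simp add: R_def\<close>)
    then have "sF \<le> \<epsilon>" unfolding cin mtr using sFpos by simp
    then have "sF\<^sup>2 \<le> \<epsilon>\<^sup>2" using sFpos by (intro power_mono) auto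
    then show ?thesis unfolding sF_def using F0 by simp
  qed
  have "(\<Sum>r<2^length xs. \<Sum>r'<2^length xs. (cmod (\<Sum>s<2^length ys. \<psi> $ emb2 r s * cnj (\<psi> $ emb2 r' s)))\<^sup>2)
      = (\<Sum>r<R. \<Sum>r'<R. (cmod (Xm r r'))\<^sup>2)" unfolding R_def Xm_def Sd_def ..
  also have "\<dots> = F + 1 / real R" by (rule eqXm)
  also have "\<dots> \<le> 1 / 2^length xs + \<epsilon>\<^sup>2" using Fb unfolding R_def by simp
  finally show ?thesis .
qed

end


lemma sum_lessThan_add: fixes a b :: nat shows "(\<Sum>k<a+b. f k) = (\<Sum>k<a. f k) + (\<Sum>k<b. f (a+k))"
  by (induct b) (simp_all add: add.assoc)

lemma embed_bits_append:
  fixes xs ys :: "nat list" and n :: nat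
  shows "embed_bits (xs @ map ((+) n) ys) r = embed_bits xs (r mod 2^length xs) + 2^n * embed_bits ys (r div 2^length xs)"
proof -
  let ?a = "length xs"
  have "embed_bits (xs @ map ((+) n) ys) r = (\<Sum>k<?a + length ys. if bit r k then 2 ^ ((xs @ map ((+) n) ys) ! k) else 0)"
    unfolding embed_bits_def by simp
  also have "\<dots> = (\<Sum>k<?a. if bit r k then 2 ^ ((xs @ map ((+) n) ys) ! k) else 0)
      + (\<Sum>k<length ys. if bit r (?a + k) then 2 ^ ((xs @ map ((+) n) ys) ! (?a + k)) else 0)"
    by (rule sum_lessThan_add)
  also have "(\<Sum>k<?a. if bit r k then 2 ^ ((xs @ map ((+) n) ys) ! k) else 0) = embed_bits xs (r mod 2^?a)"
    unfolding embed_bits_def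
    by (intro sum.cong refl) (simp add: nth_append bit_take_bit_iff flip: take_bit_eq_mod)
  also have "(\<Sum>k<length ys. if bit r (?a + k) then 2 ^ ((xs @ map ((+) n) ys) ! (?a + k)) else 0)
      = 2^n * embed_bits ys (r div 2^?a)"
    unfolding embed_bits_def sum_distrib_left
    by (intro sum.cong refl) (simp add: nth_append bit_drop_bit_eq power_add flip: drop_bit_eq_div)
  finally show ?thesis .
qed

lemma sorted_list_shift:
  fixes X Y :: "nat set"
  assumes fX: "finite X" and fY: "finite Y" and Xn: "X \<subseteq> {..<n}"
  shows "sorted_list_of_set (X \<union> (\<lambda>x. n + x) ` Y) = sorted_list_of_set X @ map ((+) n) (sorted_list_of_set Y)"
proof -
  let ?l = "sorted_list_of_set X @ map ((+) n) (sorted_list_of_set Y)"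
  have s1: "sorted_wrt (<) ?l"
    unfolding sorted_wrt_append using Xn fX fY
    by (auto simp: sorted_wrt_map strict_sorted_list_of_set subset_eq)
  have s2: "set ?l = X \<union> (\<lambda>x. n + x) ` Y" using fX fY by auto
  have dl: "distinct ?l" using s1 by (simp add: strict_sorted_iff)
  have s3: "length ?l = card (X \<union> (\<lambda>x. n + x) ` Y)"
    using distinct_card[OF dl] s2 by simp
  show ?thesis using sorted_list_of_set_unique[of "X \<union> (\<lambda>x. n + x) ` Y" ?l] s1 s2 s3 fX fY by auto
qed

lemma unitary_norm:
  assumes U: "U \<in> carrier_mat d d" and UU: "cadj U * U = 1\<^sub>m d" and w: "dim_vec w = d"
  shows "(\<Sum>i<d. (cmod ((U *\<^sub>v w) $ i))\<^sup>2) = (\<Sum>i<d. (cmod (w $ i))\<^sup>2)"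
proof -
  have cadjU: "cadj U $$ (j,i) = cnj (U $$ (i,j))" if "i < d" "j < d" for i j
    using U that unfolding cadj_def by simp
  have UUe: "(\<Sum>i<d. cnj (U $$ (i,j)) * U $$ (i,k)) = (if j = k then 1 else 0)" if j: "j < d" and k: "k < d" for j k
  proof -
    have "(cadj U * U) $$ (j,k) = (\<Sum>i<d. cadj U $$ (j,i) * U $$ (i,k))"
      using U j k unfolding cadj_def by (simp add: scalar_prod_def atLeast0LessThan)
    also have "\<dots> = (\<Sum>i<d. cnj (U $$ (i,j)) * U $$ (i,k))" using cadjU j by simp
    finally show ?thesis using UU j k by simp
  qed
  have Uw: "(U *\<^sub>v w) $ i = (\<Sum>j<d. U $$ (i,j) * w $ j)" if "i < d" for i
    using U w that by (simp add: scalar_prod_def atLeast0LessThan row_def)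
  have "complex_of_real (\<Sum>i<d. (cmod ((U *\<^sub>v w) $ i))\<^sup>2) = (\<Sum>i<d. cnj ((U *\<^sub>v w) $ i) * (U *\<^sub>v w) $ i)"
    unfolding of_real_sum complex_norm_square by (simp add: mult.commute)
  also have "\<dots> = (\<Sum>i<d. (\<Sum>j<d. cnj (U $$ (i,j)) * cnj (w $ j)) * (\<Sum>k<d. U $$ (i,k) * w $ k))"
    by (intro sum.cong refl) (simp add: Uw cnj_sum)
  also have "\<dots> = (\<Sum>i<d. \<Sum>k<d. \<Sum>j<d. cnj (w $ j) * w $ k * (cnj (U $$ (i,j)) * U $$ (i,k)))"
    by (simp add: sum_product mult_ac)
  also have "\<dots> = (\<Sum>i<d. \<Sum>j<d. \<Sum>k<d. cnj (w $ j) * w $ k * (cnj (U $$ (i,j)) * U $$ (i,k)))"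
    by (rule sum.cong[OF refl], rule sum.swap)
  also have "\<dots> = (\<Sum>j<d. \<Sum>k<d. \<Sum>i<d. cnj (w $ j) * w $ k * (cnj (U $$ (i,j)) * U $$ (i,k)))"
  proof -
    have "(\<Sum>i<d. \<Sum>j<d. \<Sum>k<d. cnj (w $ j) * w $ k * (cnj (U $$ (i,j)) * U $$ (i,k)))
        = (\<Sum>j<d. \<Sum>i<d. \<Sum>k<d. cnj (w $ j) * w $ k * (cnj (U $$ (i,j)) * U $$ (i,k)))" by (rule sum.swap)
    also have "\<dots> = (\<Sum>j<d. \<Sum>k<d. \<Sum>i<d. cnj (w $ j) * w $ k * (cnj (U $$ (i,j)) * U $$ (i,k)))"
      by (rule sum.cong[OF refl], rule sum.swap)
    finally show ?thesis .
  qed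
  also have "\<dots> = (\<Sum>j<d. \<Sum>k<d. cnj (w $ j) * w $ k * (if j = k then 1 else 0))"
    by (intro sum.cong refl) (simp add: sum_distrib_left[symmetric] UUe)
  also have "\<dots> = (\<Sum>j<d. cnj (w $ j) * w $ j)"
  proof (rule sum.cong[OF refl])
    fix j assume "j \<in> {..<d}"
    then show "(\<Sum>k<d. cnj (w $ j) * w $ k * (if j = k then 1 else 0)) = cnj (w $ j) * w $ j"
      by (subst sum_single[of _ j]) auto
  qed
  also have "\<dots> = complex_of_real (\<Sum>i<d. (cmod (w $ i))\<^sup>2)"
    unfolding of_real_sum complex_norm_square by (simp add: mult.commute)
  finally show ?thesis using of_real_eq_iff by blast
qed

lemma Uprod_norm:
  assumes unit: "\<And>t. t < T \<Longrightarrow> unitary_mat d (u t)" and v: "dim_vec v = d"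
  shows "t \<le> T \<Longrightarrow> Uprod d u t \<in> carrier_mat d d \<and> dim_vec (Uprod d u t *\<^sub>v v) = d \<and>
     (\<Sum>i<d. (cmod ((Uprod d u t *\<^sub>v v) $ i))\<^sup>2) = (\<Sum>i<d. (cmod (v $ i))\<^sup>2)"
proof (induction t)
  case 0
  have vc: "v \<in> carrier_vec d" using v by (rule carrier_vecI)
  have "1\<^sub>m d *\<^sub>v v = v" using vc by (rule one_mult_mat_vec)
  then show ?case using v by (simp only: Uprod.simps) simp
next
  case (Suc t)
  have tT: "t \<le> T" using Suc.prems by simp
  note IHa = Suc.IH[OF tT]
  have IH: "Uprod d u t \<in> carrier_mat d d" "dim_vec (Uprod d u t *\<^sub>v v) = d"
    "(\<Sum>i<d. (cmod ((Uprod d u t *\<^sub>v v) $ i))\<^sup>2) = (\<Sum>i<d. (cmod (v $ i))\<^sup>2)"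
    using IHa by blast+
  have ut: "unitary_mat d (u t)" using unit Suc.prems by simp
  then have utc: "u t \<in> carrier_mat d d" and utu: "cadj (u t) * u t = 1\<^sub>m d" unfolding unitary_mat_def by auto
  have e: "Uprod d u (Suc t) *\<^sub>v v = u t *\<^sub>v (Uprod d u t *\<^sub>v v)"
    unfolding Uprod.simps by (rule assoc_mult_mat_vec[OF utc IH(1)]) (rule carrier_vecI[OF v])
  show ?case
  proof (intro conjI)
    show "Uprod d u (Suc t) \<in> carrier_mat d d" unfolding Uprod.simps using utc IH(1) by (rule mult_carrier_mat)
    show "dim_vec (Uprod d u (Suc t) *\<^sub>v v) = d" unfolding e using utc by simp
    show "(\<Sum>i<d. (cmod ((Uprod d u (Suc t) *\<^sub>v v) $ i))\<^sup>2) = (\<Sum>i<d. (cmod (v $ i))\<^sup>2)"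
      unfolding e using unitary_norm[OF utc utu IH(2)] IH(3) by simp
  qed
qed


lemma sum_mult_split: fixes a b :: nat shows "(\<Sum>s<a*b. g s) = (\<Sum>s2<b. \<Sum>s1<a. g (s1 + a*s2))"
proof (induction b)
  case 0 then show ?case by simp
next
  case (Suc b)
  have "(\<Sum>s<a * Suc b. g s) = (\<Sum>s<a*b + a. g s)" by (simp add: add.commute)
  also have "\<dots> = (\<Sum>s<a*b. g s) + (\<Sum>s<a. g (a*b + s))" by (rule sum_lessThan_add)
  finally show ?case using Suc by (simp add: add.commute)
qed

lemma inj_mod: fixes l n t1 :: nat assumes "l \<le> n" shows "inj_on (\<lambda>j. (t1 + j) mod n) {..<l}"
proof (rule inj_onI)
  fix j j' assume j: "j \<in> {..<l}" and j': "j' \<in> {..<l}" and e: "(t1 + j) mod n = (t1 + j') mod n"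
  have main: "j = j'" if jj: "j \<le> j'" and j'n: "j' < n" and ee: "(t1 + j) mod n = (t1 + j') mod n" for j j'
  proof -
    have "n dvd (t1 + j') - (t1 + j)" using ee jj by (subst mod_eq_dvd_iff_nat[symmetric]) auto
    then have "n dvd j' - j" by simp
    moreover have "j' - j < n" using j'n by simp
    ultimately have "j' - j = 0" by (metis dvd_imp_le neq0_conv not_le)
    then show ?thesis using jj by simp
  qed
  show "j = j'"
  proof (cases "j \<le> j'")
    case True then show ?thesis using main[OF True] j' e assms by auto
  next
    case False then have "j' \<le> j" by simp
    from main[OF this] j e assms show ?thesis by auto
  qed
qed

lemma bit_pow_nat: "bit ((2::nat)^t) q \<longleftrightarrow> q = t"
  by (simp add: bit_exp_iff)

lemma proj_pow_zero: "t \<notin> set zs \<Longrightarrow> proj zs (2^t) = 0"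
  by (rule bit_eqI) (auto simp: bit_proj bit_pow_nat)

lemma proj_pow_bit: "k < length zs \<Longrightarrow> zs ! k = t \<Longrightarrow> bit (proj zs (2^t)) k"
  by (simp add: bit_proj bit_pow_nat)

lemma proj_pow_nz: "t \<in> set zs \<Longrightarrow> proj zs (2^t) \<noteq> 0"
proof -
  assume "t \<in> set zs"
  then obtain k where "k < length zs" "zs ! k = t" by (auto simp: in_set_conv_nth)
  then have "bit (proj zs (2^t)) k" by (rule proj_pow_bit)
  show ?thesis
  proof
    assume "proj zs (2^t) = 0"
    with \<open>bit (proj zs (2^t)) k\<close> show False by simp
  qed
qed

lemma proj_pow_inj: "t \<in> set zs \<Longrightarrow> proj zs (2^t) = proj zs (2^t') \<Longrightarrow> t = t'"
proof -
  assume t: "t \<in> set zs" and e: "proj zs (2^t) = proj zs (2^t')"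
  then obtain k where k: "k < length zs" "zs ! k = t" by (auto simp: in_set_conv_nth)
  then have "bit (proj zs (2^t)) k" by (rule proj_pow_bit)
  then have "bit (proj zs (2^t')) k" using e by simp
  then have "zs ! k = t'" by (simp add: bit_proj bit_pow_nat)
  then show ?thesis using k by simp
qed

context bipart
begin

lemma emb2_eq_pow: "t < N \<Longrightarrow> r < 2^length xs \<Longrightarrow> s < 2^length ys \<Longrightarrow>
   emb2 r s = 2^t \<longleftrightarrow> (r = proj xs (2^t) \<and> s = proj ys (2^t))"
proof -
  assume t: "t < N" and r: "r < 2^length xs" and s: "s < 2^length ys"
  have tp: "(2::nat)^t < 2^N" using t by simp
  show ?thesis
  proof
    assume "emb2 r s = 2^t"
    then show "r = proj xs (2^t) \<and> s = proj ys (2^t)" using proj_emb2_1[OF r, of s] proj_emb2_2[OF s, of r] by simp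
  next
    assume "r = proj xs (2^t) \<and> s = proj ys (2^t)"
    then show "emb2 r s = 2^t" using emb2_proj[OF tp] by simp
  qed
qed

end


lemma final_arith:
  fixes n l :: nat and C \<epsilon> X :: real
  assumes n0: "n > 0" and ell: "2 * l \<le> n" and C0: "C \<ge> 0"
    and eps: "\<epsilon> = C * 2 powr (- real n / 2)"
    and cond: "real l * ln 2 / (real n / 2) \<ge> C * 2 powr (- real n / 2) + C\<^sup>2 * 2 powr (real l - real n)"
    and X0: "0 < X"
    and Xb: "X \<le> (real (n - l) * real (n - l) + real l * real l) / (real n * real n) * (1 / 2^l + \<epsilon>\<^sup>2)"
  shows "- ln X \<ge> real l * ln 2"
proof -
  define N where "N = real n"
  define L where "L = real l"
  have Npos: "N > 0" unfolding N_def using n0 by simp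
  have L0: "L \<ge> 0" unfolding L_def by simp
  have LN: "2 * L \<le> N" unfolding L_def N_def using ell by linarith
  have nl: "real (n - l) = N - L" unfolding N_def L_def using ell by simp
  define q where "q = 2^l * \<epsilon>\<^sup>2"
  have q0: "q \<ge> 0" unfolding q_def by simp
  have eps0: "\<epsilon> \<ge> 0" unfolding eps using C0 by simp
  have Cq: "C\<^sup>2 * 2 powr (real l - real n) = q"
  proof -
    have "\<epsilon>\<^sup>2 = C\<^sup>2 * (2 powr (- real n / 2))\<^sup>2" unfolding eps by (simp add: power_mult_distrib)
    also have "(2 powr (- real n / 2))\<^sup>2 = 2 powr (- real n)"
      by (simp add: power2_eq_square powr_add[symmetric])
    finally have e2: "\<epsilon>\<^sup>2 = C\<^sup>2 * 2 powr (- real n)" .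
    have "2 powr (real l - real n) = 2^l * 2 powr (- real n)"
      by (simp add: powr_add[symmetric] powr_realpow[symmetric])
    then show ?thesis unfolding q_def e2 by simp
  qed
  have qb: "q \<le> 2 * L / N"
  proof -
    have "q \<le> real l * ln 2 / (real n / 2)" using cond eps0 unfolding Cq eps[symmetric] by linarith
    also have "\<dots> = 2 * L * ln 2 / N" unfolding L_def N_def by simp
    also have "\<dots> \<le> 2 * L / N"
    proof -
      have "ln (2::real) \<le> 1" using ln_2_less_1 by simp
      then have "2 * L * ln 2 \<le> 2 * L" using L0 by (simp add: mult_left_le)
      then show ?thesis using Npos by (simp add: divide_right_mono)
    qed
    finally show ?thesis .
  qed
  define S where "S = (N - L) * (N - L) + L * L"
  have S0: "S \<ge> 0" unfolding S_def by simp
  have h1: "S \<le> N * (N - L)"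
  proof -
    have "N * (N - L) - S = L * (N - 2 * L)" unfolding S_def by (simp add: algebra_simps)
    moreover have "L * (N - 2 * L) \<ge> 0" using L0 LN by simp
    ultimately show ?thesis by simp
  qed
  have h2: "q * S \<le> (2 * L / N) * (N * (N - L))"
    by (rule mult_mono[OF qb h1]) (use L0 Npos LN S0 in auto)
  have h2': "(2 * L / N) * (N * (N - L)) = 2 * L * (N - L)" using Npos by simp
  have h3: "S * (1 + q) \<le> N * N"
  proof -
    have "S * (1 + q) = S + q * S" by (simp add: algebra_simps)
    also have "\<dots> \<le> S + 2 * L * (N - L)" using h2 h2' by simp
    also have "\<dots> = N * N" unfolding S_def by (simp add: algebra_simps)
    finally show ?thesis .
  qed
  have "X \<le> S / (N * N) * (1 / 2^l + \<epsilon>\<^sup>2)" using Xb unfolding S_def nl N_def L_def by simp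
  also have "1 / 2^l + \<epsilon>\<^sup>2 = (1 + q) / 2^l" unfolding q_def by (simp add: field_simps)
  also have "S / (N * N) * ((1 + q) / 2^l) = (S * (1 + q)) / (N * N) / 2^l" by simp
  also have "\<dots> \<le> (N * N) / (N * N) / 2^l"
    by (intro divide_right_mono h3) (use Npos in auto)
  also have "\<dots> = 1 / 2^l" using Npos by simp
  finally have Xle: "X \<le> 1 / 2^l" .
  have "ln X \<le> ln (1 / 2^l)" using X0 Xle by simp
  also have "ln (1 / (2::real)^l) = - (real l * ln 2)" by (simp add: ln_div ln_realpow)
  finally show ?thesis by simp
qed

lemma B_eq:
  fixes J :: "nat set" assumes Jsub: "J \<subseteq> {..<n}"
  shows "{0..<2*n} - (J \<union> (\<lambda>x. n + x) ` J) = ({0..<n} - J) \<union> (\<lambda>x. n + x) ` ({0..<n} - J)"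
proof
  show "{0..<2*n} - (J \<union> (\<lambda>x. n + x) ` J) \<subseteq> ({0..<n} - J) \<union> (\<lambda>x. n + x) ` ({0..<n} - J)"
  proof
    fix x assume x: "x \<in> {0..<2*n} - (J \<union> (\<lambda>x. n + x) ` J)"
    show "x \<in> ({0..<n} - J) \<union> (\<lambda>x. n + x) ` ({0..<n} - J)"
    proof (cases "x < n")
      case True then show ?thesis using x by auto
    next
      case False
      then have "x = n + (x - n)" by simp
      moreover have "x - n \<in> {0..<n} - J"
      proof -
        have "x - n < n" using x False by auto
        moreover have "x - n \<notin> J"
        proof
          assume "x - n \<in> J"
          then have "n + (x - n) \<in> (\<lambda>x. n + x) ` J" by blast
          then show False using x False by auto
        qed
        ultimately show ?thesis by auto
      qed
      ultimately show ?thesis by blast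
    qed
  qed
  show "({0..<n} - J) \<union> (\<lambda>x. n + x) ` ({0..<n} - J) \<subseteq> {0..<2*n} - (J \<union> (\<lambda>x. n + x) ` J)"
    using Jsub by auto
qed


lemma idx_bound: fixes a b s1 s2 :: nat assumes "s1 < a" "s2 < b" shows "s1 + a * s2 < a * b"
proof -
  have "s1 + a * s2 < a + a * s2" using assms by simp
  also have "a + a * s2 = a * Suc s2" by simp
  also have "\<dots> \<le> a * b" using assms by (intro mult_le_mono2) simp
  finally show ?thesis .
qed

lemma idx_mod: fixes a s1 s2 :: nat shows "s1 < a \<Longrightarrow> (s1 + a * s2) mod a = s1" by simp

lemma idx_div: fixes a s1 s2 :: nat shows "s1 < a \<Longrightarrow> (s1 + a * s2) div a = s2" by simp

theorem theorem1:
  fixes n l t1 :: nat and u :: "nat \<Rightarrow> complex mat" and c :: complex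
    and v :: "complex vec" and ph C :: real
  assumes n2: "n \<ge> 2"
    and u_unit: "\<forall>t < n - 1. unitary_mat (2^n) (u t)"
    and u_loc: "\<forall>t < n - 1. supported_on n {t, t+1} (u t)"
    and u_last: "u (n - 1) = c \<cdot>\<^sub>m 1\<^sub>m (2^n)"
    and c_abs: "cmod c = 1"
    and v_dim: "dim_vec v = 2^n"
    and v_norm: "cvnorm v = 1"
    and v_eig: "Uprod (2^n) u n *\<^sub>v v = cis ph \<cdot>\<^sub>v v"
    and t1: "t1 < n"
    and ell: "2 * l \<le> n"
    and C_nonneg: "C \<ge> 0"
    and ETH: "\<forall>t < n. \<forall>X. supported_on n ((\<lambda>j. (t1 + j) mod n) ` {..<l}) X \<and> opnorm_le1 X \<longrightarrow>
         cmod (cinner (Uprod (2^n) u t *\<^sub>v v) (X *\<^sub>v (Uprod (2^n) u t *\<^sub>v v))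
               - mtrace X / 2^n) \<le> C * 2 powr (- real n / 2)"
    and cond: "real l * ln 2 / (real n / 2) \<ge> C * 2 powr (- real n / 2) + C\<^sup>2 * 2 powr (real l - real n)"
  shows "\<forall>m < n. ent_entropy (2*n)
           ((\<lambda>j. (t1 + j) mod n) ` {..<l} \<union> (\<lambda>j. n + (t1 + j) mod n) ` {..<l})
           (Psi_state n u v (2 * pi * real m / real n) ph)
         \<ge> real l * ln 2"
proof (intro allI impI)
  fix m assume m: "m < n"
  have n0: "n > 0" using n2 by simp
  have ln: "l \<le> n" using ell by simp
  define J where "J = (\<lambda>j. (t1 + j) mod n) ` {..<l}"
  define K where "K = {0..<n} - J"
  define jl where "jl = sorted_list_of_set J"
  define kl where "kl = sorted_list_of_set K"
  have Jsub: "J \<subseteq> {..<n}" unfolding J_def using n0 by auto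
  have Ksub: "K \<subseteq> {..<n}" unfolding K_def by auto
  have finJ: "finite J" unfolding J_def by simp
  have finK: "finite K" unfolding K_def by simp
  have cardJ: "card J = l" unfolding J_def using inj_mod[OF ln] by (simp add: card_image)
  have cardK: "card K = n - l"
  proof -
    have "J \<subseteq> {0..<n}" using Jsub by auto
    then show ?thesis unfolding K_def using cardJ finJ by (simp add: card_Diff_subset)
  qed
  have setjl: "set jl = J" unfolding jl_def using finJ by simp
  have setkl: "set kl = K" unfolding kl_def using finK by simp
  have ljl: "length jl = l" unfolding jl_def using cardJ by simp
  have lkl: "length kl = n - l" unfolding kl_def using cardK by simp
  interpret bp: bipart jl kl n
  proof
    show "distinct jl" unfolding jl_def by simp
    show "distinct kl" unfolding kl_def by simp
    show "set jl \<inter> set kl = {}" unfolding setjl setkl K_def by auto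
    show "set jl \<union> set kl = {..<n}" unfolding setjl setkl K_def using Jsub by auto
  qed
  have vn: "(\<Sum>i<2^n. (cmod (v $ i))\<^sup>2) = 1" using v_norm v_dim unfolding cvnorm_def by simp
  define \<psi> where "\<psi> t = Uprod (2^n) u t *\<^sub>v v" for t
  have unit': "\<And>t. t < n - 1 \<Longrightarrow> unitary_mat (2^n) (u t)" using u_unit by auto
  have psi_props: "dim_vec (\<psi> t) = 2^n \<and> (\<Sum>i<2^n. (cmod (\<psi> t $ i))\<^sup>2) = 1" if t: "t < n" for t
  proof -
    have "t \<le> n - 1" using t by simp
    from Uprod_norm[where T="n-1" and d="2^n" and u=u and v=v and t=t, OF unit' v_dim this]
    show ?thesis unfolding \<psi>_def using vn by (simp only:)
  qed
  define \<epsilon> where "\<epsilon> = C * 2 powr (- real n / 2)"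
  have Pbd: "(\<Sum>r<2^l. \<Sum>r'<2^l. (cmod (\<Sum>s<2^(n-l). \<psi> t $ bp.emb2 r s * cnj (\<psi> t $ bp.emb2 r' s)))\<^sup>2) \<le> 1/2^l + \<epsilon>\<^sup>2"
    if t: "t < n" for t
  proof -
    have "(\<Sum>r<2^length jl. \<Sum>r'<2^length jl. (cmod (\<Sum>s<2^length kl. \<psi> t $ bp.emb2 r s * cnj (\<psi> t $ bp.emb2 r' s)))\<^sup>2) \<le> 1/2^length jl + \<epsilon>\<^sup>2"
    proof (rule bp.eth_purity)
      show "dim_vec (\<psi> t) = 2^n" using psi_props[OF t] by simp
      show "(\<Sum>i<2^n. (cmod (\<psi> t $ i))\<^sup>2) = 1" using psi_props[OF t] by simp
      fix X assume "supported_on n (set jl) X" "opnorm_le1 X"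
      then show "cmod (cinner (\<psi> t) (X *\<^sub>v \<psi> t) - mtrace X / 2^n) \<le> \<epsilon>"
        using ETH t unfolding setjl J_def \<psi>_def \<epsilon>_def by blast
    qed
    then show ?thesis using ljl lkl by simp
  qed
  have tr1: "(\<Sum>r<2^l. \<Sum>s<2^(n-l). \<psi> t $ bp.emb2 r s * cnj (\<psi> t $ bp.emb2 r s)) = 1" if t: "t < n" for t
  proof -
    have "(\<Sum>r<2^l. \<Sum>s<2^(n-l). \<psi> t $ bp.emb2 r s * cnj (\<psi> t $ bp.emb2 r s))
        = complex_of_real (\<Sum>r<2^length jl. \<Sum>s<2^length kl. (cmod (\<psi> t $ bp.emb2 r s))\<^sup>2)"
      unfolding of_real_sum complex_norm_square ljl lkl ..
    also have "\<dots> = complex_of_real (\<Sum>i<2^n. (cmod (\<psi> t $ i))\<^sup>2)" unfolding bp.sum_split ..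
    also have "\<dots> = 1" using psi_props[OF t] by simp
    finally show ?thesis .
  qed
  define a where "a t = proj jl (2^t)" for t :: nat
  define b where "b t = proj kl (2^t)" for t :: nat
  define kk where "kk = 2 * pi * real m / real n"
  define cc where "cc t = cis ((kk - ph / real n) * real t) / complex_of_real (sqrt (real n))" for t :: nat
  define \<phi> where "\<phi> t r s = \<psi> t $ bp.emb2 r s" for t r s
  interpret pu: purity n l "n - l" "2^l" "2^(n-l)" l "\<lambda>t. t \<in> J" a b cc \<phi> "1/2^l + \<epsilon>\<^sup>2"
  proof
    fix t assume t: "t < n"
    show "a t < 2^l" unfolding a_def using proj_less[of jl] ljl by simp
    show "b t < 2^(n-l)" unfolding b_def using proj_less[of kl] lkl by simp
    show "(cmod (cc t))\<^sup>2 = 1 / real n" unfolding cc_def using n0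
      by (simp add: norm_divide power_divide)
    show "(\<Sum>r<2^l. \<Sum>r'<2^l. (cmod (\<Sum>s<2^(n-l). \<phi> t r s * cnj (\<phi> t r' s)))\<^sup>2) \<le> 1/2^l + \<epsilon>\<^sup>2"
      unfolding \<phi>_def using Pbd[OF t] .
    show "(\<Sum>r<2^l. \<Sum>s<2^(n-l). \<phi> t r s * cnj (\<phi> t r s)) = 1" unfolding \<phi>_def using tr1[OF t] .
  next
    fix t assume t: "t < n" and tJ: "t \<in> J"
    show "b t = 0 \<and> a t \<noteq> 0" unfolding a_def b_def
      using proj_pow_zero[of t kl] proj_pow_nz[of t jl] tJ setjl setkl K_def by auto
  next
    fix t assume t: "t < n" and tJ: "t \<notin> J"
    have "t \<in> K" unfolding K_def using t tJ by auto
    then show "a t = 0 \<and> b t \<noteq> 0" unfolding a_def b_def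
      using proj_pow_zero[of t jl] proj_pow_nz[of t kl] tJ setjl setkl by auto
  next
    fix t t' assume "t < n" "t' < n" "t \<in> J" "t' \<in> J" "a t = a t'"
    then show "t = t'" unfolding a_def using proj_pow_inj[of t jl t'] setjl by auto
  next
    fix t t' assume "t < n" "t' < n" "t \<notin> J" "t' \<notin> J" "b t = b t'"
    then show "t = t'" unfolding b_def using proj_pow_inj[of t kl t'] setkl K_def by auto
  next
    show "card {t. t < n \<and> t \<in> J} = l"
    proof -
      have "{t. t < n \<and> t \<in> J} = J" using Jsub by auto
      then show ?thesis using cardJ by simp
    qed
  qed
  define A where "A = (\<lambda>j. (t1 + j) mod n) ` {..<l} \<union> (\<lambda>j. n + (t1 + j) mod n) ` {..<l}"
  have A_eq: "A = J \<union> (\<lambda>x. n + x) ` J" unfolding A_def J_def by (simp add: image_image)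
  have sA: "sorted_list_of_set A = jl @ map ((+) n) jl"
    unfolding A_eq jl_def by (rule sorted_list_shift[OF finJ finJ Jsub])
  have sB: "sorted_list_of_set ({0..<2*n} - A) = kl @ map ((+) n) kl"
    unfolding A_eq B_eq[OF Jsub] kl_def K_def[symmetric] by (rule sorted_list_shift[OF finK finK Ksub])
  define \<Psi> where "\<Psi> = Psi_state n u v kk ph"
  define a2 where "a2 = jl @ map ((+) n) jl"
  define b2 where "b2 = kl @ map ((+) n) kl"
  define M where "M r s = \<Psi> $ (embed_bits a2 r + embed_bits b2 s)" for r s
  define d where "d = (2::nat)^l * 2^l"
  define D where "D = (2::nat)^(n-l) * 2^(n-l)"
  have la2: "2 ^ length a2 = d" unfolding a2_def d_def using ljl by (simp add: power_add)
  have lb2: "2 ^ length b2 = D" unfolding b2_def D_def using lkl by (simp add: power_add)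
  define F where "F = (\<lambda>(r,r'). \<Sum>s<D. M r s * cnj (M r' s))"
  have RA: "reduced_dm (2*n) A \<Psi> = mat d d F"
    unfolding reduced_dm_def Let_def sA sB a2_def[symmetric] b2_def[symmetric] la2 lb2 F_def M_def ..
  have Mval: "M r s = pu.Psi (r mod 2^l) (r div 2^l) (s mod 2^(n-l)) (s div 2^(n-l))"
    if r: "r < d" and s: "s < D" for r s
  proof -
    define r1 where "r1 = r mod 2^l"
    define r2 where "r2 = r div 2^l"
    define s1 where "s1 = s mod 2^(n-l)"
    define s2 where "s2 = s div 2^(n-l)"
    have r2l: "r2 < 2^length jl" unfolding r2_def ljl using r unfolding d_def by (simp add: less_mult_imp_div_less)
    have s2l: "s2 < 2^length kl" unfolding s2_def lkl using s unfolding D_def by (simp add: less_mult_imp_div_less)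
    define lo where "lo = bp.emb2 r1 s1"
    define hi where "hi = bp.emb2 r2 s2"
    have lo_lt: "lo < 2^n" unfolding lo_def by (rule bp.emb2_less)
    have hi_lt: "hi < 2^n" unfolding hi_def by (rule bp.emb2_less)
    have idx: "embed_bits a2 r + embed_bits b2 s = lo + 2^n * hi"
      unfolding a2_def b2_def embed_bits_append ljl lkl lo_def hi_def bp.emb2_def r1_def r2_def s1_def s2_def
      by (simp add: algebra_simps)
    have idx_lt: "lo + 2^n * hi < 2^(2*n)"
    proof -
      have "lo + 2^n * hi < 2^n * 2^n" by (rule idx_bound[OF lo_lt hi_lt])
      then show ?thesis by (simp add: power_add[symmetric] mult_2)
    qed
    have dv: "(lo + 2^n * hi) div 2^n = hi" using lo_lt by (rule idx_div)
    have md: "(lo + 2^n * hi) mod 2^n = lo" using lo_lt by (rule idx_mod)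
    have "M r s = (\<Sum>t<n. if hi = 2^t then cc t * \<psi> t $ lo else 0)"
      unfolding M_def idx \<Psi>_def Psi_state_def index_vec[OF idx_lt] dv md cc_def \<psi>_def by simp
    also have "\<dots> = (\<Sum>t<n. if r2 = a t \<and> s2 = b t then cc t * \<phi> t r1 s1 else 0)"
    proof (rule sum.cong[OF refl])
      fix t assume "t \<in> {..<n}"
      then have t: "t < n" by simp
      have "hi = 2^t \<longleftrightarrow> r2 = a t \<and> s2 = b t"
        unfolding hi_def a_def b_def by (rule bp.emb2_eq_pow[OF t r2l s2l])
      then show "(if hi = 2^t then cc t * \<psi> t $ lo else 0) = (if r2 = a t \<and> s2 = b t then cc t * \<phi> t r1 s1 else 0)"
        unfolding \<phi>_def lo_def by simp
    qed
    also have "\<dots> = pu.Psi r1 r2 s1 s2" unfolding pu.Psi_def ..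
    finally show ?thesis unfolding r1_def r2_def s1_def s2_def .
  qed
  have rhoA: "F (r, r') = pu.rho (r mod 2^l) (r div 2^l) (r' mod 2^l) (r' div 2^l)"
    if r: "r < d" and r': "r' < d" for r r'
  proof -
    have "F (r, r') = (\<Sum>s2<2^(n-l). \<Sum>s1<2^(n-l). M r (s1 + 2^(n-l)*s2) * cnj (M r' (s1 + 2^(n-l)*s2)))"
      unfolding F_def D_def by (simp add: sum_mult_split)
    also have "\<dots> = (\<Sum>s2<2^(n-l). \<Sum>s1<2^(n-l). pu.Psi (r mod 2^l) (r div 2^l) s1 s2 * cnj (pu.Psi (r' mod 2^l) (r' div 2^l) s1 s2))"
    proof (intro sum.cong refl)
      fix s2 s1 :: nat assume s2: "s2 \<in> {..<2^(n-l)}" and s1: "s1 \<in> {..<2^(n-l)}"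
      have sl: "s1 + 2^(n-l)*s2 < D" unfolding D_def using s1 s2 by (intro idx_bound) auto
      have m1: "(s1 + 2^(n-l)*s2) mod 2^(n-l) = s1" using s1 by (intro idx_mod) auto
      have d1: "(s1 + 2^(n-l)*s2) div 2^(n-l) = s2" using s1 by (intro idx_div) auto
      show "M r (s1 + 2^(n-l)*s2) * cnj (M r' (s1 + 2^(n-l)*s2)) = pu.Psi (r mod 2^l) (r div 2^l) s1 s2 * cnj (pu.Psi (r' mod 2^l) (r' div 2^l) s1 s2)"
        unfolding Mval[OF r sl] Mval[OF r' sl] m1 d1 ..
    qed
    also have "\<dots> = pu.rho (r mod 2^l) (r div 2^l) (r' mod 2^l) (r' div 2^l)" unfolding pu.rho_def ..
    finally show ?thesis .
  qed
  have trace: "(\<Sum>r<d. mat d d F $$ (r,r)) = 1"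
  proof -
    have "(\<Sum>r<d. mat d d F $$ (r,r)) = (\<Sum>r<d. pu.rho (r mod 2^l) (r div 2^l) (r mod 2^l) (r div 2^l))"
      by (intro sum.cong refl) (simp add: rhoA)
    also have "\<dots> = (\<Sum>r2<2^l. \<Sum>r1<2^l. pu.rho r1 r2 r1 r2)"
      unfolding d_def sum_mult_split by (intro sum.cong refl) (simp add: idx_mod idx_div)
    also have "\<dots> = 1" by (rule pu.trace_one[OF n0])
    finally show ?thesis .
  qed
  have TJ: "pu.TJ = J" unfolding pu.TJ_def using Jsub by auto
  have cTK: "card pu.TK = n - l" using pu.card_split cardJ TJ by simp
  define X where "X = (\<Sum>r<d. \<Sum>r'<d. (cmod (mat d d F $$ (r,r')))\<^sup>2)"
  have pur: "X \<le> (real (n - l) * real (n - l) + real l * real l) / (real n * real n) * (1 / 2^l + \<epsilon>\<^sup>2)"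
  proof -
    let ?P = "1 / 2^l + \<epsilon>\<^sup>2"
    have "X = (\<Sum>r<d. \<Sum>r'<d. (cmod (pu.rho (r mod 2^l) (r div 2^l) (r' mod 2^l) (r' div 2^l)))\<^sup>2)"
      unfolding X_def by (intro sum.cong refl) (simp add: rhoA)
    also have "\<dots> = (\<Sum>r2<2^l. \<Sum>r1<2^l. \<Sum>r2'<2^l. \<Sum>r1'<2^l. (cmod (pu.rho r1 r2 r1' r2'))\<^sup>2)"
      unfolding d_def sum_mult_split by (intro sum.cong refl) (simp add: idx_mod idx_div)
    also have "\<dots> = (\<Sum>r1<2^l. \<Sum>r1'<2^l. \<Sum>r2<2^l. \<Sum>r2'<2^l. (cmod (pu.rho r1 r2 r1' r2'))\<^sup>2)"
    proof -
      have "(\<Sum>r2<(2::nat)^l. \<Sum>r1<(2::nat)^l. \<Sum>r2'<(2::nat)^l. \<Sum>r1'<(2::nat)^l. (cmod (pu.rho r1 r2 r1' r2'))\<^sup>2)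
          = (\<Sum>r1<2^l. \<Sum>r2<2^l. \<Sum>r2'<2^l. \<Sum>r1'<2^l. (cmod (pu.rho r1 r2 r1' r2'))\<^sup>2)"
        by (rule sum.swap)
      also have "\<dots> = (\<Sum>r1<2^l. \<Sum>r2<2^l. \<Sum>r1'<2^l. \<Sum>r2'<2^l. (cmod (pu.rho r1 r2 r1' r2'))\<^sup>2)"
        by (rule sum.cong[OF refl], rule sum.cong[OF refl], rule sum.swap)
      also have "\<dots> = (\<Sum>r1<2^l. \<Sum>r1'<2^l. \<Sum>r2<2^l. \<Sum>r2'<2^l. (cmod (pu.rho r1 r2 r1' r2'))\<^sup>2)"
        by (rule sum.cong[OF refl], rule sum.swap)
      finally show ?thesis .
    qed
    also have "\<dots> = (\<Sum>r1<2^l. \<Sum>r1'<2^l. \<Sum>r2<2^l. \<Sum>r2'<2^l. (cmod (pu.rhoK r1 r2 r1' r2'))\<^sup>2)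
        + (\<Sum>r1<2^l. \<Sum>r1'<2^l. \<Sum>r2<2^l. \<Sum>r2'<2^l. (cmod (pu.rhoJ r1 r2 r1' r2'))\<^sup>2)"
      unfolding pu.rho_sq by (simp add: sum.distrib)
    also have "\<dots> \<le> real (card pu.TK) * real (card pu.TK) / (real n * real n) * ?P
        + real (card pu.TJ) * real (card pu.TJ) / (real n * real n) * ?P"
      by (rule add_mono[OF pu.SK_bound pu.SJ_bound])
    also have "\<dots> = (real (n - l) * real (n - l) + real l * real l) / (real n * real n) * ?P"
      unfolding cTK TJ cardJ by (simp add: add_divide_distrib distrib_right)
    finally show ?thesis .
  qed
  have Xpos: "0 < X"
  proof -
    have "\<exists>r<d. mat d d F $$ (r,r) \<noteq> 0"
    proof (rule ccontr)
      assume "\<not> ?thesis"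
      then have "(\<Sum>r<d. mat d d F $$ (r,r)) = 0" by (intro sum.neutral) auto
      then show False using trace by simp
    qed
    then obtain r where r: "r < d" "mat d d F $$ (r,r) \<noteq> 0" by auto
    have "(cmod (mat d d F $$ (r,r)))\<^sup>2 \<le> (\<Sum>r'<d. (cmod (mat d d F $$ (r,r')))\<^sup>2)"
      by (rule member_le_sum) (use r in auto)
    also have "\<dots> \<le> X" unfolding X_def
      by (rule member_le_sum[of r]) (use r in \<open>auto intro: sum_nonneg\<close>)
    finally show ?thesis using r by (smt (verit) zero_less_norm_iff zero_less_power2)
  qed
  have ent: "ent_entropy (2*n) A \<Psi> \<ge> - ln X"
    unfolding ent_entropy_def RA X_def by (rule entropy_bound[where M=M and D=D, OF _ trace]) (simp add: F_def)
  have fin: "- ln X \<ge> real l * ln 2"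
    by (rule final_arith[OF n0 ell C_nonneg \<epsilon>_def cond Xpos pur])
  show "ent_entropy (2*n) ((\<lambda>j. (t1 + j) mod n) ` {..<l} \<union> (\<lambda>j. n + (t1 + j) mod n) ` {..<l})
           (Psi_state n u v (2 * pi * real m / real n) ph) \<ge> real l * ln 2"
    using ent fin unfolding A_def \<Psi>_def kk_def by linarith
qed

end
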